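(* Let $X$ be a compact metric space and $f\colon X\to X$ a continuous map with the shadowing property. If $\dim X=0$ and $h_{top}(f)>0$, then there is a chain component $C\in\mathcal{C}(f)$ such that $f|_C\colon C\to C$ has the shadowing property and $h_{top}(f|_C)>0$.
   Context: A $\delta$-chain of $f$ is a finite sequence $(x_i)_{i=0}^k$, $k>0$, with $d(f(x_i),x_{i+1})\le\delta$ for all $0\le i<k$; write $x\to_{f,\delta}y$ if such a chain exists with $x_0=x$, $x_k=y$. $CR(f)=\{x: x\to_{f,\delta}x\ \forall\delta>0\}$. For $x,y\in CR(f)$, $x\leftrightarrow_f y$ iff $x\to_{f,\delta}y$ and $y\to_{f,\delta}x$ for all $\delta>0$; the equivalence classes (chain components) are closed $f$-invariant sets, and $\mathcal{C}(f)$ denotes the set of chain components. Shadowing property: for every $\epsilon>0$ there is $\delta>0$ such that every sequence $(x_i)_{i\ge0}$ with $d(f(x_i),x_{i+1})\le\delta$ for all $i$ is $\epsilon$-shadowed by some $x$, i.e., $d(f^i(x),x_i)\le\epsilon$ for all $i$. $h_{top}$ is topological entropy. *)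

theory Defs
  imports "HOL-Analysis.Analysis"
begin

definition delta_chain_rel :: "('a::metric_space \<Rightarrow> 'a) \<Rightarrow> 'a set \<Rightarrow> real \<Rightarrow> 'a \<Rightarrow> 'a \<Rightarrow> bool" where
  "delta_chain_rel f X \<delta> x y \<longleftrightarrow>
     (\<exists>k::nat. k > 0 \<and> (\<exists>xs::nat \<Rightarrow> 'a. xs 0 = x \<and> xs k = y \<and> (\<forall>i\<le>k. xs i \<in> X)
        \<and> (\<forall>i<k. dist (f (xs i)) (xs (Suc i)) \<le> \<delta>)))"

definition chain_recurrent_set :: "('a::metric_space \<Rightarrow> 'a) \<Rightarrow> 'a set \<Rightarrow> 'a set" where
  "chain_recurrent_set f X = {x \<in> X. \<forall>\<delta>>0. delta_chain_rel f X \<delta> x x}"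

definition chain_equiv :: "('a::metric_space \<Rightarrow> 'a) \<Rightarrow> 'a set \<Rightarrow> 'a \<Rightarrow> 'a \<Rightarrow> bool" where
  "chain_equiv f X x y \<longleftrightarrow> x \<in> chain_recurrent_set f X \<and> y \<in> chain_recurrent_set f X \<and>
     (\<forall>\<delta>>0. delta_chain_rel f X \<delta> x y \<and> delta_chain_rel f X \<delta> y x)"

definition chain_components :: "('a::metric_space \<Rightarrow> 'a) \<Rightarrow> 'a set \<Rightarrow> 'a set set" where
  "chain_components f X = {{y. chain_equiv f X x y} | x. x \<in> chain_recurrent_set f X}"

definition shadowing :: "('a::metric_space \<Rightarrow> 'a) \<Rightarrow> 'a set \<Rightarrow> bool" where
  "shadowing f X \<longleftrightarrow>
     (\<forall>\<epsilon>>0. \<exists>\<delta>>0. \<forall>xs::nat \<Rightarrow> 'a. (\<forall>i. xs i \<in> X) \<and> (\<forall>i. dist (f (xs i)) (xs (Suc i)) \<le> \<delta>)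
        \<longrightarrow> (\<exists>x\<in>X. \<forall>i. dist ((f ^^ i) x) (xs i) \<le> \<epsilon>))"

definition zero_dimensional :: "'a::metric_space set \<Rightarrow> bool" where
  "zero_dimensional X \<longleftrightarrow>
     (\<forall>x\<in>X. \<forall>e>0. \<exists>U. x \<in> U \<and> U \<subseteq> ball x e \<and>
        openin (top_of_set X) U \<and> closedin (top_of_set X) U)"

text \<open>Topological entropy (Bowen, via (n,eps)-separated sets) of f restricted to K.\<close>
definition separated_set :: "('a::metric_space \<Rightarrow> 'a) \<Rightarrow> 'a set \<Rightarrow> nat \<Rightarrow> real \<Rightarrow> 'a set \<Rightarrow> bool" where
  "separated_set f K n \<epsilon> E \<longleftrightarrow> E \<subseteq> K \<and>
     (\<forall>x\<in>E. \<forall>y\<in>E. x \<noteq> y \<longrightarrow> (\<exists>i<n. dist ((f ^^ i) x) ((f ^^ i) y) > \<epsilon>))"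

text \<open>Maximal cardinality of an (n,eps)-separated subset of K (finite for compact K).\<close>
definition max_sep :: "('a::metric_space \<Rightarrow> 'a) \<Rightarrow> 'a set \<Rightarrow> nat \<Rightarrow> real \<Rightarrow> real" where
  "max_sep f K n \<epsilon> = Sup {real (card E) | E. finite E \<and> separated_set f K n \<epsilon> E}"

definition htop :: "('a::metric_space \<Rightarrow> 'a) \<Rightarrow> 'a set \<Rightarrow> ereal" where
  "htop f K = (SUP \<epsilon> \<in> {0<..}. limsup (\<lambda>n. ereal (ln (max_sep f K n \<epsilon>) / real n)))"

end

theory Submission
  imports Defs "HOL-Real_Asymp.Real_Asymp"
begin

definition ispart :: "'a::metric_space set \<Rightarrow> ('a \<Rightarrow> 'a set) \<Rightarrow> bool" where
  "ispart X c \<longleftrightarrow> (\<forall>x\<in>X. x \<in> c x \<and> c x \<subseteq> X \<and> openin (top_of_set X) (c x) \<and> (\<forall>y\<in>c x. c y = c x)) \<and> finite (c ` X)"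

lemma part_exists:
  assumes "compact X" "zero_dimensional X" "e > 0"
  shows "\<exists>c. ispart X c \<and> (\<forall>x\<in>X. \<forall>y\<in>c x. dist x y < e)"
proof -
  have "\<forall>x\<in>X. \<exists>U. x \<in> U \<and> U \<subseteq> ball x (e/2) \<and> openin (top_of_set X) U \<and> closedin (top_of_set X) U"
    using assms(2,3) unfolding zero_dimensional_def by (meson half_gt_zero)
  then obtain U where U: "\<And>x. x\<in>X \<Longrightarrow> x \<in> U x \<and> U x \<subseteq> ball x (e/2) \<and> openin (top_of_set X) (U x) \<and> closedin (top_of_set X) (U x)"
    by metis
  have "\<forall>x\<in>X. \<exists>T. open T \<and> U x = X \<inter> T" using U openin_open by (metis inf_commute)
  then obtain T where T: "\<And>x. x\<in>X \<Longrightarrow> open (T x) \<and> U x = X \<inter> T x" by metis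
  have cov: "X \<subseteq> (\<Union>x\<in>X. T x)" using U T by blast
  obtain t where t: "t \<subseteq> X" "finite t" "X \<subseteq> (\<Union>x\<in>t. T x)"
    using compactE_image[OF assms(1), of X T] cov T by blast
  define c where "c x = {y\<in>X. \<forall>i\<in>t. (x \<in> U i \<longleftrightarrow> y \<in> U i)}" for x
  have op: "openin (top_of_set X) (c x)" if "x \<in> X" for x
  proof -
    define V where "V i = (if x \<in> U i then U i else X - U i)" for i
    have "c x = (\<Inter>i\<in>t. V i) \<inter> topspace (top_of_set X)"
    proof
      show "c x \<subseteq> (\<Inter>i\<in>t. V i) \<inter> topspace (top_of_set X)"
      proof
        fix y assume y: "y \<in> c x"
        have "y \<in> V i" if "i \<in> t" for i
        proof (cases "x \<in> U i")
          case True then show ?thesis using y that unfolding V_def c_def by simp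
        next
          case False then show ?thesis using y that unfolding V_def c_def by simp
        qed
        then show "y \<in> (\<Inter>i\<in>t. V i) \<inter> topspace (top_of_set X)" using y unfolding c_def by simp
      qed
      show "(\<Inter>i\<in>t. V i) \<inter> topspace (top_of_set X) \<subseteq> c x"
      proof
        fix y assume y: "y \<in> (\<Inter>i\<in>t. V i) \<inter> topspace (top_of_set X)"
        have "x \<in> U i \<longleftrightarrow> y \<in> U i" if "i \<in> t" for i
        proof -
          have yV: "y \<in> V i" using y that by blast
          show ?thesis
          proof (cases "x \<in> U i")
            case True then show ?thesis using yV unfolding V_def by simp
          next
            case False then show ?thesis using yV unfolding V_def by simp
          qed
        qed
        then show "y \<in> c x" using y unfolding c_def by auto
      qed
    qed
    moreover have "openin (top_of_set X) ((\<Inter>i\<in>t. V i) \<inter> topspace (top_of_set X))"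
    proof (rule openin_INT[OF t(2)])
      fix i assume "i \<in> t"
      then have "i \<in> X" using t(1) by auto
      then show "openin (top_of_set X) (V i)"
        unfolding V_def using U[of i] closedin_def by auto
    qed
    ultimately show ?thesis by simp
  qed
  have fin: "finite (c ` X)"
  proof -
    have "c ` X \<subseteq> (\<lambda>S. {y\<in>X. \<forall>i\<in>t. (i \<in> S \<longleftrightarrow> y \<in> U i)}) ` Pow t"
    proof
      fix A assume "A \<in> c ` X"
      then obtain x where x: "x \<in> X" "A = c x" by auto
      have "A = (\<lambda>S. {y\<in>X. \<forall>i\<in>t. (i \<in> S \<longleftrightarrow> y \<in> U i)}) {i\<in>t. x \<in> U i}"
        unfolding x c_def by auto
      then show "A \<in> (\<lambda>S. {y\<in>X. \<forall>i\<in>t. (i \<in> S \<longleftrightarrow> y \<in> U i)}) ` Pow t" by blast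
    qed
    then show ?thesis by (rule finite_subset) (intro finite_imageI finite_Pow_iff[THEN iffD2] t(2))
  qed
  have "\<forall>x\<in>X. x \<in> c x \<and> c x \<subseteq> X \<and> openin (top_of_set X) (c x) \<and> (\<forall>y\<in>c x. c y = c x)"
  proof
    fix x assume x: "x \<in> X"
    have 1: "x \<in> c x" using x by (simp add: c_def)
    have 2: "c x \<subseteq> X" by (simp add: c_def)
    have 3: "\<forall>y\<in>c x. c y = c x"
    proof
      fix y assume y: "y \<in> c x"
      then have "\<forall>i\<in>t. (x \<in> U i \<longleftrightarrow> y \<in> U i)" by (simp add: c_def)
      then show "c y = c x" unfolding c_def by blast
    qed
    show "x \<in> c x \<and> c x \<subseteq> X \<and> openin (top_of_set X) (c x) \<and> (\<forall>y\<in>c x. c y = c x)"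
      using 1 2 3 op[OF x] by blast
  qed
  then have "ispart X c" using fin unfolding ispart_def by blast
  moreover have "\<forall>x\<in>X. \<forall>y\<in>c x. dist x y < e"
  proof (intro ballI)
    fix x y assume x: "x \<in> X" and y: "y \<in> c x"
    obtain i where i: "i \<in> t" "x \<in> T i" using t(3) x by auto
    then have "x \<in> U i" using T t(1) x by auto
    then have "y \<in> U i" using y i unfolding c_def by auto
    have iX: "i \<in> X" using t(1) i by auto
    have Ub: "U i \<subseteq> ball i (e/2)" using U[OF iX] by blast
    have "dist i x < e/2" "dist i y < e/2" using Ub \<open>x \<in> U i\<close> \<open>y \<in> U i\<close> by (meson mem_ball subsetD)+
    then show "dist x y < e" by (metis dist_commute dist_triangle_half_r)
  qed
  ultimately have H: "ispart X c \<and> (\<forall>x\<in>X. \<forall>y\<in>c x. dist x y < e)" by (rule conjI)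
  show ?thesis by (rule exI[where x=c], rule H)
qed

lemma ispartD:
  assumes "ispart X c" "x \<in> X"
  shows "x \<in> c x" "c x \<subseteq> X" "openin (top_of_set X) (c x)" "y \<in> c x \<Longrightarrow> c y = c x" "finite (c ` X)"
  using assms unfolding ispart_def by blast+

lemma ispart_closedin:
  assumes "ispart X c" "x \<in> X"
  shows "closedin (top_of_set X) (c x)"
proof -
  have "X - c x = (\<Union>y\<in>X - c x. c y)"
  proof
    show "X - c x \<subseteq> (\<Union>y\<in>X - c x. c y)"
    proof
      fix z assume "z \<in> X - c x"
      then show "z \<in> (\<Union>y\<in>X - c x. c y)" using ispartD(1)[OF assms(1), of z] by blast
    qed
    show "(\<Union>y\<in>X - c x. c y) \<subseteq> X - c x"
    proof
      fix z assume "z \<in> (\<Union>y\<in>X - c x. c y)"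
      then obtain y where y: "y \<in> X" "y \<notin> c x" "z \<in> c y" by auto
      have zX: "z \<in> X" using ispartD(2)[OF assms(1) y(1)] y(3) by auto
      have "c z = c y" using ispartD(4)[OF assms(1) y(1) y(3)] .
      moreover have "z \<notin> c x"
      proof
        assume "z \<in> c x"
        then have "c z = c x" using ispartD(4)[OF assms] by auto
        then have "c y = c x" using \<open>c z = c y\<close> by simp
        then show False using y ispartD(1)[OF assms(1) y(1)] by auto
      qed
      ultimately show "z \<in> X - c x" using zX by auto
    qed
  qed
  moreover have "openin (top_of_set X) (\<Union>y\<in>X - c x. c y)"
    using ispartD(3)[OF assms(1)] by auto
  ultimately show ?thesis
    using ispartD(2)[OF assms] by (simp add: closedin_def)
qed

lemma ispart_closed:
  assumes "ispart X c" "x \<in> X" "compact X"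
  shows "closed (c x)"
  using ispart_closedin[OF assms(1,2)] assms(3) closedin_closed_trans compact_imp_closed by blast

lemma ispart_meet:
  assumes "ispart X c" "ispart X d"
  shows "ispart X (\<lambda>x. c x \<inter> d x)"
proof -
  have "(\<lambda>x. c x \<inter> d x) ` X \<subseteq> (\<lambda>(A,B). A \<inter> B) ` (c ` X \<times> d ` X)"
  proof
    fix A assume "A \<in> (\<lambda>x. c x \<inter> d x) ` X"
    then obtain x where x: "x \<in> X" "A = c x \<inter> d x" by blast
    then have "(c x, d x) \<in> c ` X \<times> d ` X" by blast
    then show "A \<in> (\<lambda>(A,B). A \<inter> B) ` (c ` X \<times> d ` X)" using x(2) by force
  qed
  then have "finite ((\<lambda>x. c x \<inter> d x) ` X)"
  proof (rule finite_subset)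
    have "finite (c ` X)" "finite (d ` X)" using assms unfolding ispart_def by blast+
    then show "finite ((\<lambda>(A,B). A \<inter> B) ` (c ` X \<times> d ` X))" by blast
  qed
  moreover have "\<forall>x\<in>X. x \<in> c x \<inter> d x \<and> c x \<inter> d x \<subseteq> X \<and> openin (top_of_set X) (c x \<inter> d x) \<and> (\<forall>y\<in>c x \<inter> d x. c y \<inter> d y = c x \<inter> d x)"
  proof
    fix x assume x: "x \<in> X"
    note A = ispartD[OF assms(1) x] and B = ispartD[OF assms(2) x]
    show "x \<in> c x \<inter> d x \<and> c x \<inter> d x \<subseteq> X \<and> openin (top_of_set X) (c x \<inter> d x) \<and> (\<forall>y\<in>c x \<inter> d x. c y \<inter> d y = c x \<inter> d x)"
      using A B openin_Int[OF A(3) B(3)] by blast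
  qed
  ultimately show ?thesis unfolding ispart_def by blast
qed

lemma ispart_leb:
  assumes "ispart X c" "compact X"
  shows "\<exists>\<eta>>0. \<forall>x\<in>X. \<forall>y\<in>X. dist x y < \<eta> \<longrightarrow> y \<in> c x"
proof (cases "X = {}")
  case True then show ?thesis by (intro exI[of _ 1]) auto
next
  case False
  have "\<forall>x\<in>X. \<exists>T. open T \<and> c x = X \<inter> T"
    using ispartD(3)[OF assms(1)] openin_open by (metis inf_commute)
  then obtain T where T: "\<And>x. x\<in>X \<Longrightarrow> open (T x) \<and> c x = X \<inter> T x" by metis
  have cov: "X \<subseteq> \<Union>(T ` X)" using T ispartD(1)[OF assms(1)] by blast
  obtain \<delta> where d: "0 < \<delta>" "\<And>S. \<lbrakk>S \<subseteq> X; diameter S < \<delta>\<rbrakk> \<Longrightarrow> \<exists>B \<in> T ` X. S \<subseteq> B"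
    using Lebesgue_number_lemma[OF assms(2) _ cov] False T by blast
  show ?thesis
  proof (intro exI[of _ \<delta>] conjI d(1) ballI impI)
    fix x y assume xy: "x \<in> X" "y \<in> X" "dist x y < \<delta>"
    have "diameter {x,y} \<le> dist x y"
    proof -
      have "(SUP (a,b)\<in>{x,y}\<times>{x,y}. dist a b) \<le> dist x y"
        by (rule cSUP_least) (auto simp: dist_commute)
      then show ?thesis unfolding diameter_def by simp
    qed
    then obtain z where z: "z \<in> X" "{x,y} \<subseteq> T z" using d(2)[of "{x,y}"] xy by fastforce
    then have "x \<in> c z" "y \<in> c z" using T xy by auto
    then show "y \<in> c x" using ispartD(4)[OF assms(1) z(1)] by auto
  qed
qed

locale lev =
  fixes f :: "'a::metric_space \<Rightarrow> 'a" and X :: "'a set" and cs :: "nat \<Rightarrow> 'a \<Rightarrow> 'a set"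
  assumes cpt: "compact X" and cont: "continuous_on X f" and finv: "f ` X \<subseteq> X"
  and part: "\<And>j. ispart X (cs j)"
  and refine: "\<And>j x. x \<in> X \<Longrightarrow> cs (Suc j) x \<subseteq> cs j x"
  and mesh: "\<And>j x y. x \<in> X \<Longrightarrow> y \<in> cs j x \<Longrightarrow> dist x y < inverse (real (Suc j))"
  and shad: "\<And>j z. (\<And>i. z i \<in> X) \<Longrightarrow> (\<And>i. f (z i) \<in> cs (Suc j) (z (Suc i))) \<Longrightarrow> \<exists>y\<in>X. \<forall>i. (f ^^ i) y \<in> cs j (z i)"
begin

lemma cself: "x \<in> X \<Longrightarrow> x \<in> cs j x" using ispartD(1)[OF part] .
lemma csub: "x \<in> X \<Longrightarrow> y \<in> cs j x \<Longrightarrow> y \<in> X" using ispartD(2)[OF part] by blast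
lemma ceqc: "x \<in> X \<Longrightarrow> y \<in> cs j x \<Longrightarrow> cs j y = cs j x" using ispartD(4)[OF part] by blast
lemma csym: "x \<in> X \<Longrightarrow> y \<in> cs j x \<Longrightarrow> x \<in> cs j y"
  using ceqc cself by metis
lemma cfin: "finite (cs j ` X)" using part unfolding ispart_def by blast
lemma cmono: assumes "x \<in> X" "j \<le> j'" shows "cs j' x \<subseteq> cs j x"
  using assms(2)
proof (induction j' rule: dec_induct)
  case base then show ?case by simp
next
  case (step n) then show ?case using refine[of x n] assms(1) by blast
qed
lemma cmono': "x \<in> X \<Longrightarrow> j \<le> j' \<Longrightarrow> y \<in> cs j' x \<Longrightarrow> y \<in> cs j x"
  using cmono by blast
lemma cclosed: "x \<in> X \<Longrightarrow> closed (cs j x)" using ispart_closed[OF part _ cpt] .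
lemma fX: "x \<in> X \<Longrightarrow> f x \<in> X" using finv by blast
lemma fnX: "x \<in> X \<Longrightarrow> (f ^^ n) x \<in> X"
  by (induction n) (auto simp: fX)
lemma leb: "\<exists>\<eta>>0. \<forall>x\<in>X. \<forall>y\<in>X. dist x y < \<eta> \<longrightarrow> y \<in> cs j x"
  using ispart_leb[OF part cpt] .
lemma Xclosed: "closed X" using cpt compact_imp_closed by blast

lemma cell_eventually:
  assumes "x \<in> X" "\<And>n. u n \<in> X" "u \<longlonglongrightarrow> x"
  shows "\<exists>N. \<forall>n\<ge>N. u n \<in> cs j x"
proof -
  obtain T where T: "open T" "cs j x = X \<inter> T"
    using ispartD(3)[OF part assms(1)] openin_open by (metis inf_commute)
  have "x \<in> T" using T cself[OF assms(1)] by blast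
  then have "eventually (\<lambda>n. u n \<in> T) sequentially"
    using assms(3) T(1) topological_tendstoD by blast
  then obtain N where "\<forall>n\<ge>N. u n \<in> T" unfolding eventually_sequentially by blast
  then show ?thesis using assms(2) T(2) by blast
qed

lemma fn_cont: "continuous_on X (f ^^ n)"
proof (induction n)
  case 0 then show ?case by (simp add: continuous_on_id)
next
  case (Suc n)
  have "continuous_on X (f \<circ> (f ^^ n))"
    by (rule continuous_on_compose[OF Suc]) (rule continuous_on_subset[OF cont], use fnX in blast)
  then show ?case by (simp only: funpow.simps)
qed

lemma cell_limit:
  assumes "\<And>n. u n \<in> X" "u \<longlonglongrightarrow> x" "\<And>n. (f ^^ i) (u n) \<in> cs j a" "a \<in> X"
  shows "(f ^^ i) x \<in> cs j a"
proof -
  have xX: "x \<in> X" using Xclosed assms(1,2) closed_sequentially by blast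
  have "((f ^^ i) \<circ> u) \<longlonglongrightarrow> (f ^^ i) x"
    using fn_cont[of i] xX assms(1,2) unfolding continuous_on_sequentially by blast
  then have "(\<lambda>n. (f ^^ i) (u n)) \<longlonglongrightarrow> (f ^^ i) x" by (simp only: comp_def)
  then show ?thesis using closed_sequentially[OF cclosed[OF assms(4)], of "\<lambda>n. (f ^^ i) (u n)"] assms(3) by blast
qed

definition cc :: "nat \<Rightarrow> 'a \<Rightarrow> 'a \<Rightarrow> bool" where
  "cc j a b \<longleftrightarrow> (\<exists>k>0. \<exists>z. (\<forall>i\<le>k. z i \<in> X) \<and> (\<forall>i<k. f (z i) \<in> cs j (z (Suc i))) \<and> z 0 \<in> cs j a \<and> z k \<in> cs j b)"

definition ceq :: "nat \<Rightarrow> 'a \<Rightarrow> 'a \<Rightarrow> bool" where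
  "ceq j a b \<longleftrightarrow> cc j a b \<and> cc j b a"

lemma cc_trans:
  assumes "a \<in> X" "b \<in> X" "c \<in> X" "cc j a b" "cc j b c"
  shows "cc j a c"
proof -
  obtain k z where z: "k > 0" "\<forall>i\<le>k. z i \<in> X" "\<forall>i<k. f (z i) \<in> cs j (z (Suc i))" "z 0 \<in> cs j a" "z k \<in> cs j b"
    using assms(4) unfolding cc_def by blast
  obtain l w where w: "l > 0" "\<forall>i\<le>l. w i \<in> X" "\<forall>i<l. f (w i) \<in> cs j (w (Suc i))" "w 0 \<in> cs j b" "w l \<in> cs j c"
    using assms(5) unfolding cc_def by blast
  define u where "u i = (if i < k then z i else w (i - k))" for i
  have "cs j (z k) = cs j b" using ceqc[OF assms(2) z(5)] .
  moreover have "cs j (w 0) = cs j b" using ceqc[OF assms(2) w(4)] .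
  ultimately have zw: "cs j (z k) = cs j (w 0)" by simp
  have "\<forall>i\<le>k+l. u i \<in> X" using z(2) w(2) unfolding u_def by auto
  moreover have "\<forall>i<k+l. f (u i) \<in> cs j (u (Suc i))"
  proof (intro allI impI)
    fix i assume i: "i < k + l"
    show "f (u i) \<in> cs j (u (Suc i))"
    proof (cases "Suc i < k")
      case True then show ?thesis using z(3) unfolding u_def by auto
    next
      case False
      show ?thesis
      proof (cases "i < k")
        case True
        then have "i = k - 1" "Suc i = k" using False by auto
        then show ?thesis using z(3) zw \<open>k > 0\<close> unfolding u_def by (metis True diff_self_eq_0 less_irrefl_nat)
      next
        case False
        then have "Suc i - k = Suc (i - k)" by simp
        then have "u i = w (i - k)" "u (Suc i) = w (Suc (i - k))" "i - k < l" using i False unfolding u_def by auto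
        then show ?thesis using w(3) by simp
      qed
    qed
  qed
  moreover have "u 0 \<in> cs j a" using z(4) \<open>k>0\<close> unfolding u_def by simp
  moreover have "u (k + l) \<in> cs j c" using w(5) unfolding u_def by simp
  ultimately show ?thesis unfolding cc_def using z(1) by (intro exI[of _ "k+l"]) auto
qed

lemma cc_cell1:
  assumes "a \<in> X" "a' \<in> cs j a" "cc j a b" shows "cc j a' b"
  using assms ceqc unfolding cc_def by metis

lemma cc_cell2:
  assumes "b \<in> X" "b' \<in> cs j b" "cc j a b" shows "cc j a b'"
  using assms ceqc unfolding cc_def by metis

lemma cc_mono:
  assumes "cc j' a b" "j \<le> j'" "a \<in> X" "b \<in> X" shows "cc j a b"
proof -
  obtain k z where z: "k > 0" "\<forall>i\<le>k. z i \<in> X" "\<forall>i<k. f (z i) \<in> cs j' (z (Suc i))" "z 0 \<in> cs j' a" "z k \<in> cs j' b"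
    using assms(1) unfolding cc_def by blast
  have "\<forall>i<k. f (z i) \<in> cs j (z (Suc i))" using z(2,3) cmono'[OF _ assms(2)] by auto
  moreover have "z 0 \<in> cs j a" "z k \<in> cs j b" using z(4,5) cmono'[OF _ assms(2)] assms(3,4) by auto
  ultimately show ?thesis unfolding cc_def using z(1,2) by blast
qed

lemma cc_step: "a \<in> X \<Longrightarrow> cc j a (f a)"
  unfolding cc_def
  apply (rule exI[of _ 1])
  apply (rule conjI, simp)
  apply (rule exI[of _ "\<lambda>i. if i = 0 then a else f a"])
  using cself fX by auto

lemma chain_to_cc:
  assumes "delta_chain_rel f X \<delta> a b" "\<forall>x\<in>X. \<forall>y\<in>X. dist x y < \<eta> \<longrightarrow> y \<in> cs j x" "\<delta> < \<eta>"
  shows "cc j a b"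
proof -
  obtain k xs where k: "k > 0" "xs 0 = a" "xs k = b" "\<forall>i\<le>k. xs i \<in> X" "\<forall>i<k. dist (f (xs i)) (xs (Suc i)) \<le> \<delta>"
    using assms(1) unfolding delta_chain_rel_def by blast
  have "\<forall>i<k. f (xs i) \<in> cs j (xs (Suc i))"
  proof (intro allI impI)
    fix i assume "i < k"
    then have "xs (Suc i) \<in> X" "f (xs i) \<in> X" "dist (xs (Suc i)) (f (xs i)) < \<eta>"
      using k(4,5) fX assms(3) by (auto simp: dist_commute)
    then show "f (xs i) \<in> cs j (xs (Suc i))" using assms(2) by blast
  qed
  then show ?thesis unfolding cc_def using k cself by (metis le_refl less_imp_le_nat zero_le)
qed

lemma cc_to_chain:
  assumes "\<delta> > 0"
  shows "\<exists>J. \<forall>j\<ge>J. \<forall>a\<in>X. \<forall>b\<in>X. cc j a b \<longrightarrow> delta_chain_rel f X \<delta> a b"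
proof -
  have uc: "uniformly_continuous_on X f" using compact_uniformly_continuous[OF cont cpt] .
  obtain \<rho> where \<rho>: "\<rho> > 0" "\<forall>x\<in>X. \<forall>x'\<in>X. dist x' x < \<rho> \<longrightarrow> dist (f x') (f x) < \<delta>/2"
    using uc assms unfolding uniformly_continuous_on_def by (meson half_gt_zero)
  obtain J where J: "inverse (real (Suc J)) < min \<rho> (\<delta>/2)"
    using reals_Archimedean[of "min \<rho> (\<delta>/2)"] \<rho>(1) assms by auto
  show ?thesis
  proof (intro exI[of _ J] allI impI ballI)
    fix j a b assume j: "J \<le> j" and ab: "a \<in> X" "b \<in> X" and c: "cc j a b"
    have small: "inverse (real (Suc j)) < min \<rho> (\<delta>/2)"
      using J j by (meson le_less_trans Suc_le_mono inverse_le_iff_le of_nat_0_less_iff of_nat_le_iff zero_less_Suc less_le_trans not_less)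
    obtain k z where z: "k > 0" "\<forall>i\<le>k. z i \<in> X" "\<forall>i<k. f (z i) \<in> cs j (z (Suc i))" "z 0 \<in> cs j a" "z k \<in> cs j b"
      using c unfolding cc_def by blast
    define xs where "xs i = (if i = 0 then a else if i = k then b else z i)" for i
    have czk: "cs j (z k) = cs j b" using ceqc[OF ab(2) z(5)] .
    have "\<forall>i<k. dist (f (xs i)) (xs (Suc i)) \<le> \<delta>"
    proof (intro allI impI)
      fix i assume i: "i < k"
      have zX: "z i \<in> X" "z (Suc i) \<in> X" using z(2) i by auto
      have fz: "f (z i) \<in> cs j (z (Suc i))" using z(3) i by auto
      have d1: "dist (f (z i)) (xs (Suc i)) < \<delta>/2"
      proof (cases "Suc i = k")
        case True
        then have "f (z i) \<in> cs j b" using fz czk by simp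
        then have "dist b (f (z i)) < inverse (real (Suc j))" using mesh ab(2) by blast
        then show ?thesis using True small xs_def by (simp add: dist_commute)
      next
        case False
        have "dist (z (Suc i)) (f (z i)) < inverse (real (Suc j))" using mesh zX fz by blast
        then show ?thesis using False small xs_def by (simp add: dist_commute)
      qed
      show "dist (f (xs i)) (xs (Suc i)) \<le> \<delta>"
      proof (cases "i = 0")
        case True
        have "dist a (z 0) < \<rho>" using mesh[OF ab(1) z(4)] small by simp
        then have "dist (f (z 0)) (f a) < \<delta>/2" using \<rho>(2) ab(1) z(2) by (simp add: dist_commute)
        then have "dist (f a) (xs (Suc i)) < \<delta>" using d1 True dist_triangle_half_l by (metis dist_commute)
        then show ?thesis using True xs_def by simp
      next
        case False
        have "xs i = z i" using False i xs_def by simp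
        then have "dist (f (xs i)) (xs (Suc i)) < \<delta>/2" using d1 by simp
        then show ?thesis using assms by linarith
      qed
    qed
    moreover have "\<forall>i\<le>k. xs i \<in> X" using z(2) ab xs_def by auto
    moreover have "xs 0 = a" "xs k = b" using z(1) by (simp_all add: xs_def)
    ultimately show "delta_chain_rel f X \<delta> a b"
      unfolding delta_chain_rel_def using z(1) by blast
  qed
qed

lemma CR_iff: "x \<in> chain_recurrent_set f X \<longleftrightarrow> x \<in> X \<and> (\<forall>j. cc j x x)"
proof
  assume x: "x \<in> chain_recurrent_set f X"
  then have xX: "x \<in> X" unfolding chain_recurrent_set_def by blast
  have "cc j x x" for j
  proof -
    obtain \<eta> where e: "\<eta> > 0" "\<forall>x\<in>X. \<forall>y\<in>X. dist x y < \<eta> \<longrightarrow> y \<in> cs j x" using leb by blast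
    have "delta_chain_rel f X (\<eta>/2) x x" using x e(1) unfolding chain_recurrent_set_def by auto
    then show ?thesis using chain_to_cc e by auto
  qed
  then show "x \<in> X \<and> (\<forall>j. cc j x x)" using xX by blast
next
  assume x: "x \<in> X \<and> (\<forall>j. cc j x x)"
  have "delta_chain_rel f X \<delta> x x" if "\<delta> > 0" for \<delta>
    using cc_to_chain[OF that] x by blast
  then show "x \<in> chain_recurrent_set f X" unfolding chain_recurrent_set_def using x by blast
qed

lemma CE_iff: "chain_equiv f X x y \<longleftrightarrow> x \<in> X \<and> y \<in> X \<and> (\<forall>j. ceq j x y)"
proof
  assume h: "chain_equiv f X x y"
  then have xy: "x \<in> X" "y \<in> X" unfolding chain_equiv_def chain_recurrent_set_def by auto
  have "ceq j x y" for j
  proof -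
    obtain \<eta> where e: "\<eta> > 0" "\<forall>x\<in>X. \<forall>y\<in>X. dist x y < \<eta> \<longrightarrow> y \<in> cs j x" using leb by blast
    have "delta_chain_rel f X (\<eta>/2) x y" "delta_chain_rel f X (\<eta>/2) y x"
      using h e(1) unfolding chain_equiv_def by auto
    then show ?thesis unfolding ceq_def using chain_to_cc e by auto
  qed
  then show "x \<in> X \<and> y \<in> X \<and> (\<forall>j. ceq j x y)" using xy by blast
next
  assume h: "x \<in> X \<and> y \<in> X \<and> (\<forall>j. ceq j x y)"
  have "cc j x x" "cc j y y" for j using h cc_trans unfolding ceq_def by meson+
  then have "x \<in> chain_recurrent_set f X" "y \<in> chain_recurrent_set f X" using CR_iff h by auto
  moreover have "delta_chain_rel f X \<delta> x y \<and> delta_chain_rel f X \<delta> y x" if "\<delta> > 0" for \<delta>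
    using cc_to_chain[OF that] h unfolding ceq_def by blast
  ultimately show "chain_equiv f X x y" unfolding chain_equiv_def by blast
qed

lemma cc_back:
  assumes "y \<in> X" "\<forall>j. cc j y y"
  shows "cc j (f y) y"
proof -
  obtain \<eta> where e: "\<eta> > 0" "\<forall>x\<in>X. \<forall>y\<in>X. dist x y < \<eta> \<longrightarrow> y \<in> cs j x" using leb by blast
  have uc: "uniformly_continuous_on X f" using compact_uniformly_continuous[OF cont cpt] .
  obtain \<rho> where \<rho>: "\<rho> > 0" "\<forall>x\<in>X. \<forall>x'\<in>X. dist x' x < \<rho> \<longrightarrow> dist (f x') (f x) < \<eta>"
    using uc e(1) unfolding uniformly_continuous_on_def by meson
  obtain J where J: "inverse (real (Suc J)) < \<rho>"
    using reals_Archimedean[of \<rho>] \<rho>(1) by auto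
  define j' where "j' = max j J"
  have jj: "j \<le> j'" unfolding j'_def by simp
  have small: "inverse (real (Suc j')) < \<rho>"
    using J unfolding j'_def
    by (meson le_less_trans Suc_le_mono inverse_le_iff_le of_nat_0_less_iff of_nat_le_iff zero_less_Suc max.cobounded2)
  obtain k z where z: "k > 0" "\<forall>i\<le>k. z i \<in> X" "\<forall>i<k. f (z i) \<in> cs j' (z (Suc i))" "z 0 \<in> cs j' y" "z k \<in> cs j' y"
    using assms(2) unfolding cc_def by blast
  have "dist y (z 0) < \<rho>" using mesh[OF assms(1) z(4)] small by simp
  then have "dist (f (z 0)) (f y) < \<eta>" using \<rho>(2) assms(1) z(2) by (simp add: dist_commute)
  then have fy: "f y \<in> cs j (f (z 0))" using e(2) fX assms(1) z(2) by auto
  have "f (z 0) \<in> cs j (z 1)" using z(3) z(1) cmono'[OF _ jj] z(2) by auto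
  then have "cs j (f (z 0)) = cs j (z 1)" using ceqc z(2) z(1) by (metis One_nat_def Suc_leI)
  then have fy1: "f y \<in> cs j (z 1)" using fy by simp
  show ?thesis
  proof (cases "k = 1")
    case True
    then have "z 1 \<in> cs j y" using z(5) cmono'[OF assms(1) jj] by simp
    then have "f y \<in> cs j y" using fy1 ceqc[OF assms(1)] by blast
    then show ?thesis using cc_cell1[OF assms(1) _ assms(2)[rule_format, of j]] by blast
  next
    case False
    define w where "w i = z (Suc i)" for i
    have "\<forall>i\<le>k-1. w i \<in> X"
    proof (intro allI impI)
      fix i assume "i \<le> k - 1"
      then have "Suc i \<le> k" using z(1) by linarith
      then show "w i \<in> X" using z(2) w_def by simp
    qed
    moreover have "\<forall>i<k-1. f (w i) \<in> cs j (w (Suc i))"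
      using z(3) cmono'[OF _ jj] z(2) w_def by auto
    moreover have "w 0 \<in> cs j (f y)" using fy1 csym[OF fX[OF assms(1)]] csym z(2) z(1) w_def
      by (metis One_nat_def Suc_leI)
    moreover have "w (k-1) \<in> cs j y" using z(5) cmono'[OF assms(1) jj] False z(1) w_def by simp
    ultimately show ?thesis unfolding cc_def using False z(1) by (intro exI[of _ "k-1"]) auto
  qed
qed

lemma CE_f:
  assumes "chain_equiv f X x y" shows "chain_equiv f X x (f y)"
proof -
  have h: "x \<in> X" "y \<in> X" "\<forall>j. ceq j x y" using assms CE_iff by auto
  have yy: "\<forall>j. cc j y y" using h cc_trans unfolding ceq_def by meson
  have "ceq j x (f y)" for j
  proof -
    have "cc j x (f y)" using cc_trans[OF h(1,2) fX[OF h(2)]] h(3) cc_step[OF h(2)] unfolding ceq_def by blast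
    moreover have "cc j (f y) x" using cc_trans[OF fX[OF h(2)] h(2) h(1)] cc_back[OF h(2) yy] h(3) unfolding ceq_def by blast
    ultimately show ?thesis unfolding ceq_def by blast
  qed
  then show ?thesis using CE_iff h fX by blast
qed

lemma CE_fn: "chain_equiv f X x y \<Longrightarrow> chain_equiv f X x ((f ^^ n) y)"
  by (induction n) (auto intro: CE_f)

lemma ceq_trans: "a \<in> X \<Longrightarrow> b \<in> X \<Longrightarrow> c \<in> X \<Longrightarrow> ceq j a b \<Longrightarrow> ceq j b c \<Longrightarrow> ceq j a c"
  unfolding ceq_def using cc_trans by blast
lemma ceq_sym: "ceq j a b \<Longrightarrow> ceq j b a" unfolding ceq_def by blast
lemma ceq_mono: "ceq j' a b \<Longrightarrow> j \<le> j' \<Longrightarrow> a \<in> X \<Longrightarrow> b \<in> X \<Longrightarrow> ceq j a b"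
  unfolding ceq_def using cc_mono by blast
lemma ceq_cell2: "b \<in> X \<Longrightarrow> b' \<in> cs j b \<Longrightarrow> ceq j a b \<Longrightarrow> ceq j a b'"
  unfolding ceq_def using cc_cell1 cc_cell2 by blast

end

lemma trans_seq:
  fixes V :: "'b set" and E :: "'b \<Rightarrow> 'b \<Rightarrow> bool"
  assumes finV: "finite V" and v0: "v0 \<in> V"
    and conn: "\<And>A B. A \<in> V \<Longrightarrow> B \<in> V \<Longrightarrow> \<exists>c. set c \<subseteq> V \<and> successively E (A # c @ [B])"
  shows "\<exists>T. (\<forall>i. T i \<in> V) \<and> (\<forall>i. E (T i) (T (Suc i))) \<and>
    (\<forall>w N. w \<noteq> [] \<longrightarrow> set w \<subseteq> V \<longrightarrow> successively E w \<longrightarrow> (\<exists>p\<ge>N. \<forall>i<length w. T (p+i) = w!i))"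
proof -
  define P where "P = {w. w \<noteq> [] \<and> set w \<subseteq> V \<and> successively E w}"
  have P0: "[v0] \<in> P" using v0 unfolding P_def by simp
  have cP: "countable P"
  proof (rule countable_subset)
    show "P \<subseteq> lists V" unfolding P_def by auto
    show "countable (lists V)" using finV by (simp add: countable_finite)
  qed
  define e where "e n = from_nat_into P (fst (prod_decode n))" for n
  have Pne: "P \<noteq> {}" using P0 by blast
  have eP: "e n \<in> P" for n unfolding e_def by (rule from_nat_into[OF Pne])
  then have e1: "e n \<noteq> []" "set (e n) \<subseteq> V" "successively E (e n)" for n unfolding P_def by auto
  have hdV: "hd (e n) \<in> V" for n using e1(1,2) hd_in_set by blast
  have lastV: "last (e n) \<in> V" for n using e1(1,2) last_in_set by blast
  define mid where "mid n = (SOME c. set c \<subseteq> V \<and> successively E (last (e n) # c @ [hd (e (Suc n))]))" for n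
  have mid: "set (mid n) \<subseteq> V \<and> successively E (last (e n) # mid n @ [hd (e (Suc n))])" for n
    unfolding mid_def by (rule someI_ex) (rule conn[OF lastV hdV])
  define B where "B n = e n @ mid n" for n
  define Pre where "Pre n = concat (map B [0..<n])" for n
  have PreS: "Pre (Suc n) = Pre n @ B n" for n unfolding Pre_def by simp
  have Bne: "B n \<noteq> []" for n unfolding B_def using e1 by simp
  have Pre_pref: "\<exists>r. Pre m = Pre n @ r" if "n \<le> m" for n m
    using that
  proof (induction m rule: dec_induct)
    case base then show ?case by simp
  next
    case (step k) then show ?case using PreS by (metis append.assoc)
  qed
  have Pre_len: "length (Pre n) \<ge> n" for n
  proof (induction n)
    case 0 then show ?case by simp
  next
    case (Suc n)
    have "length (B n) \<ge> 1" using Bne[of n] by (cases "B n") auto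
    then show ?case using Suc PreS[of n] by simp
  qed
  have Pre_set: "set (Pre n) \<subseteq> V" for n
  proof -
    have midV: "set (mid n) \<subseteq> V" for n using mid by blast
    show ?thesis unfolding Pre_def B_def using e1(2) midV by auto
  qed
  have Pre_succ: "successively E (Pre n @ [hd (e n)])" for n
  proof (induction n)
    case 0 then show ?case unfolding Pre_def by simp
  next
    case (Suc n)
    have m: "successively E (last (e n) # mid n @ [hd (e (Suc n))])" using mid by blast
    have s2: "successively E (e n @ mid n @ [hd (e (Suc n))])"
    proof -
      have "successively E (mid n @ [hd (e (Suc n))])" using m by (cases "mid n @ [hd (e (Suc n))]") (auto simp: successively_Cons)
      moreover have "E (last (e n)) (hd (mid n @ [hd (e (Suc n))]))" using m by (cases "mid n @ [hd (e (Suc n))]") (auto simp: successively_Cons)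
      ultimately show ?thesis unfolding successively_append_iff[of E "e n"] using e1(3)[of n] e1(1)[of n] by simp
    qed
    have "Pre (Suc n) @ [hd (e (Suc n))] = Pre n @ (e n @ mid n @ [hd (e (Suc n))])"
      using PreS B_def by simp
    moreover have "successively E (Pre n @ (e n @ mid n @ [hd (e (Suc n))]))"
    proof -
      have IH: "successively E (Pre n @ [hd (e n)])" by (rule Suc.IH)
      have a: "successively E (Pre n)" using IH unfolding successively_append_iff by blast
      have b: "Pre n = [] \<or> E (last (Pre n)) (hd (e n))" using IH unfolding successively_append_iff by simp
      have h: "hd (e n @ mid n @ [hd (e (Suc n))]) = hd (e n)" using e1(1) by simp
      show ?thesis unfolding successively_append_iff[of E "Pre n"] using a b s2 h by simp
    qed
    ultimately show ?case by simp
  qed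
  define T where "T i = Pre (Suc i) ! i" for i
  have Tnth: "T i = Pre m ! i" if "i < length (Pre m)" for i m
  proof (cases "Suc i \<le> m")
    case True
    then obtain r where "Pre m = Pre (Suc i) @ r" using Pre_pref by blast
    moreover have "i < length (Pre (Suc i))" using Pre_len[of "Suc i"] by simp
    ultimately show ?thesis unfolding T_def by (simp add: nth_append)
  next
    case False
    then obtain r where "Pre (Suc i) = Pre m @ r" using Pre_pref by (metis nat_le_linear)
    then show ?thesis unfolding T_def using that by (simp add: nth_append)
  qed
  have TV: "T i \<in> V" for i
  proof -
    have "i < length (Pre (Suc i))" using Pre_len[of "Suc i"] by simp
    then show ?thesis unfolding T_def using Pre_set nth_mem by blast
  qed
  have TE: "E (T i) (T (Suc i))" for i
  proof -
    have l: "Suc i < length (Pre (Suc (Suc i)))" using Pre_len[of "Suc (Suc i)"] by simp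
    then have "E ((Pre (Suc (Suc i)) @ [hd (e (Suc (Suc i)))]) ! i) ((Pre (Suc (Suc i)) @ [hd (e (Suc (Suc i)))]) ! Suc i)"
      using successively_nth[OF Pre_succ] by simp
    then show ?thesis using Tnth[of i "Suc (Suc i)"] Tnth[of "Suc i" "Suc (Suc i)"] l by (simp add: nth_append)
  qed
  have win: "\<exists>p\<ge>N. \<forall>i<length w. T (p+i) = w!i" if w: "w \<noteq> []" "set w \<subseteq> V" "successively E w" for w N
  proof -
    have "w \<in> P" unfolding P_def using w by simp
    then obtain a where a: "from_nat_into P a = w" using from_nat_into_surj[OF cP] by blast
    define n where "n = prod_encode (a, N)"
    have en: "e n = w" unfolding e_def n_def using a by simp
    have nN: "N \<le> n" unfolding n_def by (rule le_prod_encode_2)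
    define p where "p = length (Pre n)"
    have pN: "N \<le> p" using nN Pre_len[of n] unfolding p_def by simp
    have "T (p+i) = w!i" if i: "i < length w" for i
    proof -
      have "length (Pre (Suc n)) = p + length (B n)" using PreS unfolding p_def by simp
      moreover have "length (B n) \<ge> length w" unfolding B_def using en by simp
      ultimately have "p + i < length (Pre (Suc n))" using i by simp
      then have "T (p+i) = Pre (Suc n) ! (p+i)" using Tnth by blast
      also have "\<dots> = B n ! i" using PreS unfolding p_def by (simp add: nth_append)
      also have "\<dots> = w ! i" unfolding B_def using en i by (simp add: nth_append)
      finally show ?thesis .
    qed
    then show ?thesis using pN by blast
  qed
  show ?thesis using TV TE win by blast
qed

context lev begin

lemma cc_sub:
  assumes "\<forall>i\<le>k. z i \<in> X" "\<forall>i<k. f (z i) \<in> cs j (z (Suc i))" "a < b" "b \<le> k"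
  shows "cc j (z a) (z b)"
  unfolding cc_def
proof (intro exI[of _ "b - a"] conjI)
  show "0 < b - a" using assms(3) by simp
  show "\<exists>w. (\<forall>i\<le>b - a. w i \<in> X) \<and> (\<forall>i<b - a. f (w i) \<in> cs j (w (Suc i))) \<and> w 0 \<in> cs j (z a) \<and> w (b - a) \<in> cs j (z b)"
  proof (intro exI[of _ "\<lambda>i. z (a + i)"] conjI allI impI)
    show "z (a + i) \<in> X" if "i \<le> b - a" for i using assms(1,3,4) that by simp
    show "f (z (a + i)) \<in> cs j (z (a + Suc i))" if "i < b - a" for i using assms(2,3,4) that by simp
    show "z (a + 0) \<in> cs j (z a)" using cself assms(1,3,4) by simp
    show "z (a + (b - a)) \<in> cs j (z b)" using cself assms(1,3,4) by simp
  qed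
qed

definition path :: "nat \<Rightarrow> (nat \<Rightarrow> 'a) \<Rightarrow> bool" where
  "path m z \<longleftrightarrow> (\<forall>i. z i \<in> X) \<and> (\<forall>i. f (z i) \<in> cs m (z (Suc i)))"

definition realizes :: "nat \<Rightarrow> 'a \<Rightarrow> (nat \<Rightarrow> 'a) \<Rightarrow> bool" where
  "realizes k y z \<longleftrightarrow> (\<forall>i. (f ^^ i) y \<in> cs k (z i))"

lemma fn_Suc: "f ((f ^^ n) x) = (f ^^ Suc n) x" by simp

lemma om_chain:
  assumes y0: "y0 \<in> X"
    and p: "\<And>n. p n \<ge> n" "(\<lambda>n. (f ^^ p n) y0) \<longlonglongrightarrow> u"
    and q: "\<And>n. q n \<ge> n" "(\<lambda>n. (f ^^ q n) y0) \<longlonglongrightarrow> w"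
    and d: "\<delta> > 0"
  shows "delta_chain_rel f X \<delta> u w"
proof -
  have uX: "u \<in> X" using closed_sequentially[OF Xclosed, of "\<lambda>n. (f ^^ p n) y0"] p(2) fnX[OF y0] by blast
  have wX: "w \<in> X" using closed_sequentially[OF Xclosed, of "\<lambda>n. (f ^^ q n) y0"] q(2) fnX[OF y0] by blast
  have uc: "uniformly_continuous_on X f" using compact_uniformly_continuous[OF cont cpt] .
  obtain \<rho> where \<rho>: "\<rho> > 0" "\<forall>x\<in>X. \<forall>x'\<in>X. dist x' x < \<rho> \<longrightarrow> dist (f x') (f x) < \<delta>/2"
    using uc d unfolding uniformly_continuous_on_def by (meson half_gt_zero)
  define \<delta>' where "\<delta>' = min \<rho> (\<delta>/2)"
  have d': "\<delta>' > 0" using \<rho>(1) d unfolding \<delta>'_def by simp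
  obtain n1 where n1: "\<forall>n\<ge>n1. dist ((f ^^ p n) y0) u < \<delta>'" using p(2) d' unfolding lim_sequentially by blast
  obtain n2 where n2: "\<forall>n\<ge>n2. dist ((f ^^ q n) y0) w < \<delta>'" using q(2) d' unfolding lim_sequentially by blast
  define P where "P = p n1"
  define n where "n = max n2 (Suc P)"
  define Q where "Q = q n"
  have QP: "Q > P" using q(1)[of n] unfolding Q_def n_def by simp
  have dP: "dist ((f ^^ P) y0) u < \<delta>'" using n1 unfolding P_def by simp
  have dQ: "dist ((f ^^ Q) y0) w < \<delta>'" using n2 unfolding Q_def n_def by simp
  define K where "K = Q - P"
  have K0: "K > 0" using QP unfolding K_def by simp
  have QK: "P + K = Q" using QP unfolding K_def by simp
  define xs where "xs i = (if i = 0 then u else if i = K then w else (f ^^ (P + i)) y0)" for i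
  have f1: "dist (f u) ((f ^^ Suc P) y0) < \<delta>/2"
  proof -
    have "dist ((f ^^ P) y0) u < \<rho>" using dP unfolding \<delta>'_def by simp
    then have "dist (f ((f ^^ P) y0)) (f u) < \<delta>/2" using \<rho>(2) uX fnX[OF y0] by blast
    then show ?thesis by (simp add: dist_commute)
  qed
  have steps: "\<forall>i<K. dist (f (xs i)) (xs (Suc i)) \<le> \<delta>"
  proof (intro allI impI)
    fix i assume i: "i < K"
    show "dist (f (xs i)) (xs (Suc i)) \<le> \<delta>"
    proof (cases "i = 0")
      case True
      show ?thesis
      proof (cases "K = 1")
        case True
        then have "xs (Suc i) = w" "Q = Suc P" using \<open>i = 0\<close> QK unfolding xs_def by auto
        then have "dist ((f ^^ Suc P) y0) (xs (Suc i)) < \<delta>/2" using dQ unfolding \<delta>'_def by simp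
        then have "dist (f u) (xs (Suc i)) < \<delta>" using f1 dist_triangle_half_l by (metis dist_commute)
        then show ?thesis using \<open>i = 0\<close> unfolding xs_def by simp
      next
        case False
        then have "xs (Suc i) = (f ^^ Suc P) y0" using \<open>i = 0\<close> unfolding xs_def by simp
        then show ?thesis using f1 \<open>i = 0\<close> d unfolding xs_def by simp
      qed
    next
      case False
      then have xi: "xs i = (f ^^ (P + i)) y0" using i unfolding xs_def by simp
      have fx: "f (xs i) = (f ^^ (P + Suc i)) y0" using xi by simp
      show ?thesis
      proof (cases "Suc i = K")
        case True
        then have "xs (Suc i) = w" "P + Suc i = Q" using QK unfolding xs_def by auto
        then show ?thesis using fx dQ d unfolding \<delta>'_def by simp
      next
        case False
        then have "xs (Suc i) = (f ^^ (P + Suc i)) y0" unfolding xs_def by simp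
        then show ?thesis using fx d by simp
      qed
    qed
  qed
  have "\<forall>i\<le>K. xs i \<in> X" using uX wX fnX[OF y0] unfolding xs_def by simp
  moreover have "xs 0 = u" "xs K = w" using K0 unfolding xs_def by simp_all
  ultimately show ?thesis unfolding delta_chain_rel_def using K0 steps by blast
qed

lemma om_equiv:
  assumes y0: "y0 \<in> X"
    and p: "\<And>n. p n \<ge> n" "(\<lambda>n. (f ^^ p n) y0) \<longlonglongrightarrow> u"
    and q: "\<And>n. q n \<ge> n" "(\<lambda>n. (f ^^ q n) y0) \<longlonglongrightarrow> w"
  shows "chain_equiv f X u w"
proof -
  have uX: "u \<in> X" using closed_sequentially[OF Xclosed, of "\<lambda>n. (f ^^ p n) y0"] p(2) fnX[OF y0] by blast
  have wX: "w \<in> X" using closed_sequentially[OF Xclosed, of "\<lambda>n. (f ^^ q n) y0"] q(2) fnX[OF y0] by blast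
  have "u \<in> chain_recurrent_set f X" unfolding chain_recurrent_set_def using uX om_chain[OF y0 p p] by blast
  moreover have "w \<in> chain_recurrent_set f X" unfolding chain_recurrent_set_def using wX om_chain[OF y0 q q] by blast
  ultimately show ?thesis unfolding chain_equiv_def using om_chain[OF y0 p q] om_chain[OF y0 q p] by blast
qed

lemma seq_sub:
  fixes v :: "nat \<Rightarrow> 'a"
  assumes "\<And>n. v n \<in> X"
  obtains r y where "strict_mono r" "y \<in> X" "(v \<circ> r) \<longlonglongrightarrow> y"
  using seq_compactE[OF compact_imp_seq_compact[OF cpt], of v] assms by blast

lemma ceq_refl: "ceq j d d \<longleftrightarrow> cc j d d" unfolding ceq_def by simp

lemma LL:
  assumes dX: "d \<in> X" and dd: "cc (Suc j) d d"
  shows "\<exists>d'. d' \<in> chain_recurrent_set f X \<and> ceq j d d' \<and>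
    (\<forall>z. path (Suc j) z \<and> (\<forall>i. ceq (Suc j) d (z i)) \<longrightarrow> (\<exists>y. chain_equiv f X d' y \<and> realizes j y z))"
proof -
  define m where "m = Suc j"
  have jm: "j \<le> m" unfolding m_def by simp
  define S where "S = {x\<in>X. ceq m d x}"
  define V where "V = cs m ` S"
  define E where "E A B \<longleftrightarrow> (\<exists>x\<in>A. f x \<in> B)" for A B
  have finV: "finite V" unfolding V_def S_def by (rule finite_subset[OF _ cfin[of m]]) blast
  have dS: "d \<in> S" unfolding S_def using dX dd ceq_refl m_def by simp
  have v0: "cs m d \<in> V" unfolding V_def using dS by blast
  have SX: "x \<in> S \<Longrightarrow> x \<in> X" for x unfolding S_def by blast
  have Scell: "x' \<in> S" if "x \<in> S" "x' \<in> cs m x" for x x'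
  proof -
    have "x \<in> X" "ceq m d x" using that(1) unfolding S_def by auto
    then show ?thesis unfolding S_def using ceq_cell2 csub that(2) by blast
  qed
  have ccS: "cc m x x'" if "x \<in> S" "x' \<in> S" for x x'
  proof -
    have "ceq m d x" "ceq m d x'" using that unfolding S_def by auto
    then show ?thesis using cc_trans[of x d x'] SX that dX unfolding ceq_def by blast
  qed
  have conn: "\<exists>c. set c \<subseteq> V \<and> successively E (A # c @ [B])" if AB: "A \<in> V" "B \<in> V" for A B
  proof -
    obtain x x' where x: "x \<in> S" "A = cs m x" "x' \<in> S" "B = cs m x'" using AB unfolding V_def by blast
    have xX: "x \<in> X" "x' \<in> X" using x SX by auto
    obtain k z where z: "k > 0" "\<forall>i\<le>k. z i \<in> X" "\<forall>i<k. f (z i) \<in> cs m (z (Suc i))" "z 0 \<in> cs m x" "z k \<in> cs m x'"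
      using ccS[OF x(1) x(3)] unfolding cc_def by blast
    define g where "g i = cs m (z i)" for i
    have zS: "z i \<in> S" if "i \<le> k" for i
    proof -
      have "cc m x (z i)"
      proof (cases "i = 0")
        case True then show ?thesis using cc_cell2[OF xX(1) z(4) ccS[OF x(1) x(1)]] by simp
      next
        case False
        then have "cc m (z 0) (z i)" using cc_sub[OF z(2) z(3)] that by simp
        moreover have "x \<in> cs m (z 0)" using csym[OF xX(1) z(4)] .
        ultimately show ?thesis using cc_cell1[of "z 0" x m "z i"] z(2) by simp
      qed
      moreover have "cc m (z i) x'"
      proof (cases "i = k")
        case True then show ?thesis using cc_cell1[OF xX(2) _ ccS[OF x(3) x(3)], of "z k"] z(5) by simp
      next
        case False
        then have "cc m (z i) (z k)" using cc_sub[OF z(2) z(3)] that by simp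
        moreover have "x' \<in> cs m (z k)" using csym[OF xX(2) z(5)] .
        ultimately show ?thesis using cc_cell2[of "z k" x' m "z i"] z(2) by simp
      qed
      ultimately have "cc m x' (z i) \<and> cc m (z i) x'"
        using cc_trans[of x' x "z i"] ccS[OF x(3) x(1)] xX z(2) that by blast
      moreover have "ceq m d x'" using x(3) unfolding S_def by simp
      ultimately have "ceq m d (z i)" unfolding ceq_def using cc_trans[of d x' "z i"] cc_trans[of "z i" x' d] dX xX z(2) that by blast
      then show ?thesis unfolding S_def using z(2) that by simp
    qed
    define c where "c = map g [1..<k]"
    have L: "A # c @ [B] = map g [0..<Suc k]"
    proof -
      have "g 0 = A" unfolding g_def using ceqc[OF xX(1) z(4)] x(2) by simp
      moreover have "g k = B" unfolding g_def using ceqc[OF xX(2) z(5)] x(4) by simp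
      moreover have "[0..<Suc k] = 0 # [1..<k] @ [k]" using z(1) by (simp add: upt_conv_Cons)
      ultimately show ?thesis unfolding c_def by simp
    qed
    have "successively E (map g [0..<Suc k])"
      unfolding successively_conv_nth
    proof (intro allI impI)
      fix i assume "Suc i < length (map g [0..<Suc k])"
      then have i: "i < k" by simp
      have "z i \<in> g i" unfolding g_def using cself z(2) i by simp
      moreover have "f (z i) \<in> g (Suc i)" unfolding g_def using z(3) i by simp
      ultimately have "E (g i) (g (Suc i))" unfolding E_def by blast
      then show "E (map g [0..<Suc k] ! i) (map g [0..<Suc k] ! Suc i)" using i by (simp del: upt_Suc)
    qed
    moreover have "set c \<subseteq> V" unfolding c_def V_def g_def using zS by auto
    ultimately show ?thesis using L by metis
  qed
  obtain T where T: "\<forall>i. T i \<in> V" "\<forall>i. E (T i) (T (Suc i))"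
    "\<forall>w N. w \<noteq> [] \<longrightarrow> set w \<subseteq> V \<longrightarrow> successively E w \<longrightarrow> (\<exists>p\<ge>N. \<forall>i<length w. T (p+i) = w!i)"
    using trans_seq[OF finV v0 conn] by blast
  define t where "t i = (SOME x. x \<in> T i \<and> f x \<in> T (Suc i))" for i
  have t1: "t i \<in> T i \<and> f (t i) \<in> T (Suc i)" for i
  proof -
    have "\<exists>x. x \<in> T i \<and> f x \<in> T (Suc i)" using T(2) unfolding E_def by blast
    then show ?thesis unfolding t_def by (rule someI_ex)
  qed
  have tS: "t i \<in> S \<and> T i = cs m (t i)" for i
  proof -
    obtain x where x: "x \<in> S" "T i = cs m x" using T(1) unfolding V_def by blast
    have "t i \<in> T i" using t1 by blast
    then have "t i \<in> cs m x" using x(2) by simp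
    then show ?thesis using Scell[OF x(1)] ceqc[OF SX[OF x(1)]] x(2) by simp
  qed
  have tX: "t i \<in> X" for i using tS SX by blast
  have tpath: "f (t i) \<in> cs m (t (Suc i))" for i using t1 tS by metis
  obtain y0 where y0: "y0 \<in> X" "\<forall>i. (f ^^ i) y0 \<in> cs j (t i)"
    using shad[of t j] tX tpath unfolding m_def by blast
  obtain r d' where r: "strict_mono r" "d' \<in> X" "((\<lambda>n. (f ^^ n) y0) \<circ> r) \<longlonglongrightarrow> d'"
    using seq_sub[of "\<lambda>n. (f ^^ n) y0"] fnX[OF y0(1)] by blast
  have rge: "\<And>n. r n \<ge> n" using seq_suble[OF r(1)] by blast
  have rlim: "(\<lambda>n. (f ^^ r n) y0) \<longlonglongrightarrow> d'" using r(3) by (simp add: o_def)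
  have d'CR: "d' \<in> chain_recurrent_set f X"
    using om_equiv[OF y0(1) rge rlim rge rlim] unfolding chain_equiv_def by blast
  have ceqd: "ceq j d d'"
  proof -
    obtain N where N: "\<forall>n\<ge>N. (f ^^ r n) y0 \<in> cs j d'"
      using cell_eventually[OF r(2) _ rlim] fnX[OF y0(1)] by blast
    define q where "q = r N"
    have a: "(f ^^ q) y0 \<in> cs j d'" using N unfolding q_def by simp
    have b: "(f ^^ q) y0 \<in> cs j (t q)" using y0(2) by simp
    have "cs j (t q) = cs j ((f ^^ q) y0)" using ceqc[OF tX b] by simp
    also have "\<dots> = cs j d'" using ceqc[OF r(2) a] .
    finally have "d' \<in> cs j (t q)" using cself[OF r(2)] by simp
    moreover have "ceq j d (t q)" using tS[of q] unfolding S_def using ceq_mono[OF _ jm dX tX] by blast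
    ultimately show ?thesis using ceq_cell2[OF tX] by blast
  qed
  have real: "\<exists>y. chain_equiv f X d' y \<and> realizes j y z" if z: "path m z" "\<forall>i. ceq m d (z i)" for z
  proof -
    have zX: "z i \<in> X" for i using z(1) unfolding path_def by blast
    have zS: "z i \<in> S" for i unfolding S_def using zX z(2) by blast
    have win: "\<exists>p\<ge>n. \<forall>i\<le>n. (f ^^ i) ((f ^^ p) y0) \<in> cs j (z i)" for n
    proof -
      define w where "w = map (\<lambda>i. cs m (z i)) [0..<Suc n]"
      have "w \<noteq> []" unfolding w_def by simp
      moreover have "set w \<subseteq> V" unfolding w_def V_def using zS by auto
      moreover have "successively E w"
        unfolding w_def successively_conv_nth
      proof (intro allI impI)
        fix i assume "Suc i < length (map (\<lambda>i. cs m (z i)) [0..<Suc n])"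
        then have i: "i < n" by simp
        have "z i \<in> cs m (z i)" using cself zX by simp
        moreover have "f (z i) \<in> cs m (z (Suc i))" using z(1) unfolding path_def by blast
        ultimately have "E (cs m (z i)) (cs m (z (Suc i)))" unfolding E_def by blast
        then show "E (map (\<lambda>i. cs m (z i)) [0..<Suc n] ! i) (map (\<lambda>i. cs m (z i)) [0..<Suc n] ! Suc i)"
          using i by (simp del: upt_Suc)
      qed
      ultimately obtain p where p: "p \<ge> n" "\<forall>i<length w. T (p+i) = w!i" using T(3) by blast
      have "(f ^^ i) ((f ^^ p) y0) \<in> cs j (z i)" if i: "i \<le> n" for i
      proof -
        have "T (p+i) = cs m (z i)" using p(2) i unfolding w_def by (simp del: upt_Suc)
        then have "cs m (t (p+i)) = cs m (z i)" using tS[of "p+i"] by simp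
        then have "t (p+i) \<in> cs m (z i)" using cself[OF tX, of "p+i" m] by simp
        then have "t (p+i) \<in> cs j (z i)" using cmono'[OF zX jm] by blast
        then have c1: "cs j (t (p+i)) = cs j (z i)" using ceqc[OF zX] by blast
        have "(f ^^ (i + p)) y0 \<in> cs j (t (p+i))" using y0(2) by (simp add: add.commute)
        then show ?thesis using c1 by (simp add: funpow_add)
      qed
      then show ?thesis using p(1) by blast
    qed
    define P where "P n = (SOME p. p \<ge> n \<and> (\<forall>i\<le>n. (f ^^ i) ((f ^^ p) y0) \<in> cs j (z i)))" for n
    have P: "P n \<ge> n \<and> (\<forall>i\<le>n. (f ^^ i) ((f ^^ P n) y0) \<in> cs j (z i))" for n
      unfolding P_def using win[of n] by (rule someI_ex)
    obtain r2 y where r2: "strict_mono r2" "y \<in> X" "((\<lambda>n. (f ^^ P n) y0) \<circ> r2) \<longlonglongrightarrow> y"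
      using seq_sub[of "\<lambda>n. (f ^^ P n) y0"] fnX[OF y0(1)] by blast
    have r2ge: "\<And>n. r2 n \<ge> n" using seq_suble[OF r2(1)] by blast
    have qge: "P (r2 n) \<ge> n" for n using P[of "r2 n"] r2ge[of n] by linarith
    have ylim: "(\<lambda>n. (f ^^ P (r2 n)) y0) \<longlonglongrightarrow> y" using r2(3) by (simp add: o_def)
    have "chain_equiv f X d' y" using om_equiv[OF y0(1) rge rlim qge ylim] .
    moreover have "realizes j y z"
      unfolding realizes_def
    proof
      fix i
      have lim: "(\<lambda>n. (f ^^ P (r2 (n + i))) y0) \<longlonglongrightarrow> y"
        using LIMSEQ_ignore_initial_segment[OF ylim, of i] by simp
      have "(f ^^ i) ((f ^^ P (r2 (n + i))) y0) \<in> cs j (z i)" for n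
      proof -
        have "i \<le> r2 (n + i)" using r2ge[of "n+i"] by simp
        then show ?thesis using P[of "r2 (n+i)"] by blast
      qed
      then show "(f ^^ i) y \<in> cs j (z i)"
        using cell_limit[OF _ lim _ zX] fnX[OF y0(1)] by blast
    qed
    ultimately show ?thesis by blast
  qed
  show ?thesis using d'CR ceqd real unfolding m_def by blast
qed

end

context lev begin

definition Apath :: "nat \<Rightarrow> 'a \<Rightarrow> (nat \<Rightarrow> 'a) \<Rightarrow> bool" where
  "Apath m d z \<longleftrightarrow> path m z \<and> (\<forall>i. ceq m d (z i))"

definition AR :: "nat \<Rightarrow> 'a \<Rightarrow> 'a \<Rightarrow> bool" where
  "AR k d d' \<longleftrightarrow> (\<forall>z. Apath (Suc k) d z \<longrightarrow> (\<exists>y. chain_equiv f X d' y \<and> realizes k y z))"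

definition RR :: "nat \<Rightarrow> 'a \<Rightarrow> 'a \<Rightarrow> bool" where
  "RR k d d' \<longleftrightarrow> (\<forall>y. chain_equiv f X d y \<longrightarrow> (\<exists>y'. chain_equiv f X d' y' \<and> realizes k y' (\<lambda>i. (f ^^ i) y)))"

definition AA :: "nat \<Rightarrow> 'a \<Rightarrow> 'a \<Rightarrow> bool" where
  "AA k d d' \<longleftrightarrow> (\<forall>z. Apath (Suc k) d z \<longrightarrow> (\<exists>z'. Apath (Suc k) d' z' \<and> (\<forall>i. z' i \<in> cs k (z i))))"

lemma CE_X: "chain_equiv f X a b \<Longrightarrow> a \<in> X \<and> b \<in> X" using CE_iff by blast

lemma orbit_Apath:
  assumes "chain_equiv f X d y"
  shows "Apath m d (\<lambda>i. (f ^^ i) y)"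
proof -
  have yX: "y \<in> X" using CE_X[OF assms] by blast
  have c: "f ((f ^^ i) y) \<in> cs m (f ((f ^^ i) y))" for i using cself[OF fX[OF fnX[OF yX]]] .
  have "path m (\<lambda>i. (f ^^ i) y)" unfolding path_def using fnX[OF yX] c by simp
  moreover have "ceq m d ((f ^^ i) y)" for i using CE_fn[OF assms, of i] CE_iff by blast
  ultimately show ?thesis unfolding Apath_def by blast
qed

lemma AR_AA: assumes "AR k d d'" shows "AA k d d'"
  unfolding AA_def
proof (intro allI impI)
  fix z assume z: "Apath (Suc k) d z"
  obtain y where y: "chain_equiv f X d' y" "realizes k y z" using assms z unfolding AR_def by blast
  show "\<exists>z'. Apath (Suc k) d' z' \<and> (\<forall>i. z' i \<in> cs k (z i))"
    using orbit_Apath[OF y(1)] y(2) unfolding realizes_def by blast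
qed

lemma AA_refl: "AA k d d" unfolding AA_def using cself unfolding Apath_def path_def by blast

lemma AA_trans: assumes "AA k a b" "AA k b c" shows "AA k a c"
  unfolding AA_def
proof (intro allI impI)
  fix z assume z: "Apath (Suc k) a z"
  obtain z' where z': "Apath (Suc k) b z'" "\<forall>i. z' i \<in> cs k (z i)" using assms(1) z unfolding AA_def by blast
  obtain z'' where z'': "Apath (Suc k) c z''" "\<forall>i. z'' i \<in> cs k (z' i)" using assms(2) z' unfolding AA_def by blast
  have zX: "z i \<in> X" for i using z unfolding Apath_def path_def by blast
  have "z'' i \<in> cs k (z i)" for i using z'(2) z''(2) ceqc[OF zX] by metis
  then show "\<exists>z'. Apath (Suc k) c z' \<and> (\<forall>i. z' i \<in> cs k (z i))" using z''(1) by blast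
qed

lemma AA_AR: assumes "AA k a b" "AR k b c" shows "AR k a c"
  unfolding AR_def
proof (intro allI impI)
  fix z assume z: "Apath (Suc k) a z"
  obtain z' where z': "Apath (Suc k) b z'" "\<forall>i. z' i \<in> cs k (z i)" using assms(1) z unfolding AA_def by blast
  obtain y where y: "chain_equiv f X c y" "realizes k y z'" using assms(2) z' unfolding AR_def by blast
  have zX: "z i \<in> X" for i using z unfolding Apath_def path_def by blast
  have "(f ^^ i) y \<in> cs k (z i)" for i using z'(2) y(2) ceqc[OF zX] unfolding realizes_def by metis
  then show "\<exists>y. chain_equiv f X c y \<and> realizes k y z" using y(1) unfolding realizes_def by blast
qed

lemma ceq_AA: assumes "ceq (Suc k) a b" "a \<in> X" "b \<in> X" shows "AA k b a"
  unfolding AA_def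
proof (intro allI impI)
  fix z assume z: "Apath (Suc k) b z"
  have zX: "z i \<in> X" for i using z unfolding Apath_def path_def by blast
  have "ceq (Suc k) a (z i)" for i using ceq_trans[OF assms(2,3) zX assms(1)] z unfolding Apath_def by blast
  then have "Apath (Suc k) a z" using z unfolding Apath_def by blast
  then show "\<exists>z'. Apath (Suc k) a z' \<and> (\<forall>i. z' i \<in> cs k (z i))" using cself zX by blast
qed

lemma AR_RR: assumes "AR k d d'" shows "RR k d d'"
  unfolding RR_def using assms orbit_Apath unfolding AR_def by blast

lemma RR_trans: assumes "RR k a b" "RR k b c" shows "RR k a c"
  unfolding RR_def
proof (intro allI impI)
  fix y assume y: "chain_equiv f X a y"
  obtain y' where y': "chain_equiv f X b y'" "realizes k y' (\<lambda>i. (f ^^ i) y)" using assms(1) y unfolding RR_def by blast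
  obtain y'' where y'': "chain_equiv f X c y''" "realizes k y'' (\<lambda>i. (f ^^ i) y')" using assms(2) y'(1) unfolding RR_def by blast
  have yX: "(f ^^ i) y \<in> X" for i using fnX CE_X[OF y] by blast
  have "(f ^^ i) y'' \<in> cs k ((f ^^ i) y)" for i using y'(2) y''(2) ceqc[OF yX] unfolding realizes_def by metis
  then show "\<exists>y'. chain_equiv f X c y' \<and> realizes k y' (\<lambda>i. (f ^^ i) y)" using y''(1) unfolding realizes_def by blast
qed

lemma RR_mono: assumes "RR k a b" "k' \<le> k" shows "RR k' a b"
  using assms cmono' fnX CE_X unfolding RR_def realizes_def by metis

lemma AR_RR_comp: assumes "AR k a b" "RR k b c" shows "AR k a c"
  unfolding AR_def
proof (intro allI impI)
  fix z assume z: "Apath (Suc k) a z"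
  obtain y where y: "chain_equiv f X b y" "realizes k y z" using assms(1) z unfolding AR_def by blast
  obtain y' where y': "chain_equiv f X c y'" "realizes k y' (\<lambda>i. (f ^^ i) y)" using assms(2) y(1) unfolding RR_def by blast
  have zX: "z i \<in> X" for i using z unfolding Apath_def path_def by blast
  have "(f ^^ i) y' \<in> cs k (z i)" for i
  proof -
    have a: "(f ^^ i) y \<in> cs k (z i)" using y(2) unfolding realizes_def by blast
    have b: "(f ^^ i) y' \<in> cs k ((f ^^ i) y)" using y'(2) unfolding realizes_def by blast
    show ?thesis using a b ceqc[OF zX a] by simp
  qed
  then show "\<exists>y. chain_equiv f X c y \<and> realizes k y z" using y'(1) unfolding realizes_def by blast
qed

lemma CR_cc: "x \<in> chain_recurrent_set f X \<Longrightarrow> x \<in> X \<and> cc j x x" using CR_iff by blast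

lemma phase:
  assumes dX: "d \<in> X" and dd: "cc (Suc k) d d"
  shows "\<exists>d'. d' \<in> chain_recurrent_set f X \<and> ceq k d d' \<and> AR k d d' \<and> RR k d d' \<and> AR k d' d'"
proof -
  define LLP where "LLP a b \<longleftrightarrow> b \<in> chain_recurrent_set f X \<and> ceq k a b \<and> AR k a b" for a b
  have LLex: "\<exists>b. LLP a b" if "a \<in> X" "cc (Suc k) a a" for a
    using LL[OF that] unfolding LLP_def AR_def Apath_def by blast
  define s where "s = rec_nat d (\<lambda>_ a. SOME b. LLP a b)"
  have s0: "s 0 = d" unfolding s_def by simp
  have sS: "s (Suc t) = (SOME b. LLP (s t) b)" for t unfolding s_def by simp
  have inv: "s t \<in> X \<and> cc (Suc k) (s t) (s t) \<and> LLP (s t) (s (Suc t))" for t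
  proof (induction t)
    case 0
    have "LLP d (SOME b. LLP d b)" using LLex[OF dX dd] by (rule someI_ex)
    then show ?case using dX dd s0 sS[of 0] by simp
  next
    case (Suc t)
    then have "s (Suc t) \<in> chain_recurrent_set f X" unfolding LLP_def by blast
    then have a: "s (Suc t) \<in> X" "cc (Suc k) (s (Suc t)) (s (Suc t))" using CR_cc by blast+
    have "LLP (s (Suc t)) (SOME b. LLP (s (Suc t)) b)" using LLex[OF a] by (rule someI_ex)
    then show ?case using a sS[of "Suc t"] by simp
  qed
  have sX: "s t \<in> X" for t using inv by blast
  have sCR: "s (Suc t) \<in> chain_recurrent_set f X" for t using inv unfolding LLP_def by blast
  have sAR: "AR k (s t) (s (Suc t))" for t using inv unfolding LLP_def by blast
  have sAA: "AA k (s t) (s (Suc t))" for t using AR_AA[OF sAR] .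
  have sAAle: "AA k (s a) (s b)" if "a \<le> b" for a b
    using that
  proof (induction b rule: dec_induct)
    case base then show ?case by (rule AA_refl)
  next
    case (step n) then show ?case using AA_trans sAA by blast
  qed
  have sceq: "ceq k d (s t)" for t
  proof (induction t)
    case 0 then show ?case using s0 dd cc_mono[OF dd _ dX dX, of k] unfolding ceq_def by simp
  next
    case (Suc t) then show ?case using ceq_trans[OF dX sX sX] inv unfolding LLP_def by blast
  qed
  have sRR: "RR k d (s (Suc t))" for t
  proof (induction t)
    case 0 then show ?case using AR_RR[OF sAR[of 0]] s0 by simp
  next
    case (Suc t) then show ?case using RR_trans AR_RR[OF sAR] by blast
  qed
  define N where "N = card (cs (Suc k) ` X)"
  have "\<not> inj_on (\<lambda>t. cs (Suc k) (s t)) {1..Suc N}"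
  proof
    assume inj: "inj_on (\<lambda>t. cs (Suc k) (s t)) {1..Suc N}"
    have "(\<lambda>t. cs (Suc k) (s t)) ` {1..Suc N} \<subseteq> cs (Suc k) ` X" using sX by blast
    then have "card {1..Suc N} \<le> card (cs (Suc k) ` X)" by (rule card_inj_on_le[OF inj _ cfin])
    then have "card {1..Suc N} \<le> N" unfolding N_def .
    then show False by simp
  qed
  then obtain a b where ab: "a \<in> {1..Suc N}" "b \<in> {1..Suc N}" "a \<noteq> b" "cs (Suc k) (s a) = cs (Suc k) (s b)"
    unfolding inj_on_def by blast
  obtain t1 t2 where t: "1 \<le> t1" "t1 < t2" "cs (Suc k) (s t1) = cs (Suc k) (s t2)"
  proof (cases "a < b")
    case True then show ?thesis using that[of a b] ab by auto
  next
    case False then show ?thesis using that[of b a] ab by auto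
  qed
  have CR1: "s t1 \<in> chain_recurrent_set f X" "s t2 \<in> chain_recurrent_set f X"
    using sCR[of "t1 - 1"] sCR[of "t2 - 1"] t by auto
  have "ceq (Suc k) (s t1) (s t2)"
  proof -
    have c1: "cc (Suc k) (s t1) (s t1)" "cc (Suc k) (s t2) (s t2)" using CR1 CR_cc by blast+
    have "s t2 \<in> cs (Suc k) (s t1)" using t(3) cself[OF sX] by metis
    then show ?thesis unfolding ceq_def using cc_cell2[OF sX _ c1(1)] cc_cell1[OF sX _ c1(1)] by blast
  qed
  then have A21: "AA k (s t2) (s t1)" using ceq_AA sX by blast
  have "AA k (s (Suc t1)) (s t1)" using AA_trans[OF sAAle[of "Suc t1" t2] A21] t(2) by simp
  then have ARf: "AR k (s (Suc t1)) (s (Suc t1))" using AA_AR sAR by blast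
  have "AR k d (s (Suc t1))" using AA_AR[OF sAAle[of 0 t1] sAR[of t1]] s0 by simp
  then show ?thesis using sCR[of t1] sceq[of "Suc t1"] sRR[of t1] ARf by blast
qed

end

context lev begin

definition PH :: "nat \<Rightarrow> 'a \<Rightarrow> 'a" where
  "PH k d = (SOME d'. d' \<in> chain_recurrent_set f X \<and> ceq k d d' \<and> AR k d d' \<and> RR k d d' \<and> AR k d' d')"

lemma PH:
  assumes "d \<in> X" "cc (Suc k) d d"
  shows "PH k d \<in> chain_recurrent_set f X \<and> ceq k d (PH k d) \<and> AR k d (PH k d) \<and> RR k d (PH k d) \<and> AR k (PH k d) (PH k d)"
  unfolding PH_def using phase[OF assms] by (rule someI_ex)

lemma LIM:
  fixes D :: "nat \<Rightarrow> 'a"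
  assumes DX: "\<And>n. D n \<in> X" and xl: "xl \<in> X"
    and L1: "\<And>i n. i \<le> n \<Longrightarrow> ceq i (D n) xl"
    and zX: "\<And>i. z i \<in> X"
    and R: "\<And>n. n \<ge> nb \<Longrightarrow> \<exists>y. chain_equiv f X (D n) y \<and> realizes k y z"
  shows "\<exists>y. chain_equiv f X xl y \<and> realizes k y z"
proof -
  define Y where "Y n = (SOME y. chain_equiv f X (D n) y \<and> realizes k y z)" for n
  have Y: "chain_equiv f X (D n) (Y n) \<and> realizes k (Y n) z" if "n \<ge> nb" for n
    unfolding Y_def using R[OF that] by (rule someI_ex)
  define w where "w n = Y (n + nb)" for n
  have wX: "w n \<in> X" for n using Y[of "n + nb"] CE_X unfolding w_def by auto
  obtain r2 y where r2: "strict_mono r2" "y \<in> X" "(w \<circ> r2) \<longlonglongrightarrow> y"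
    using seq_sub[of w] wX by blast
  have r2ge: "\<And>n. r2 n \<ge> n" using seq_suble[OF r2(1)] by blast
  have ylim: "(\<lambda>n. w (r2 n)) \<longlonglongrightarrow> y" using r2(3) by (simp add: o_def)
  have "ceq i xl y" for i
  proof -
    obtain M where M: "\<forall>n\<ge>M. w (r2 n) \<in> cs i y" using cell_eventually[OF r2(2) _ ylim] wX by blast
    define n where "n = max M i"
    define N' where "N' = r2 n + nb"
    have N'i: "i \<le> N'" using r2ge[of n] unfolding N'_def n_def by simp
    have N'0: "nb \<le> N'" unfolding N'_def by simp
    have a: "ceq i (D N') xl" using L1[OF N'i] .
    have b: "ceq i (D N') (Y N')" using Y[OF N'0] CE_iff by blast
    have c: "Y N' \<in> cs i y" using M unfolding n_def w_def N'_def by simp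
    have YX: "Y N' \<in> X" using Y[OF N'0] CE_X by blast
    have "ceq i xl (Y N')" using ceq_trans[OF xl DX YX ceq_sym[OF a] b] .
    then show ?thesis using ceq_cell2[OF YX csym[OF r2(2) c]] by blast
  qed
  then have "chain_equiv f X xl y" using CE_iff xl r2(2) by blast
  moreover have "realizes k y z"
    unfolding realizes_def
  proof
    fix i
    have "(f ^^ i) (w (r2 n)) \<in> cs k (z i)" for n
      using Y[of "r2 n + nb"] unfolding w_def realizes_def by simp
    then show "(f ^^ i) y \<in> cs k (z i)" using cell_limit[OF _ ylim _ zX] wX by blast
  qed
  ultimately show ?thesis by blast
qed

lemma good_component:
  assumes vX: "v \<in> X" and vv: "cc (Suc k0) v v"
  shows "\<exists>x0. x0 \<in> chain_recurrent_set f X \<and> AR k0 v x0 \<and> (\<forall>k\<ge>k0. AR k x0 x0)"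
proof -
  define D where "D = rec_nat (PH k0 v) (\<lambda>n d. PH (k0 + Suc n) d)"
  have D0: "D 0 = PH k0 v" unfolding D_def by simp
  have DS: "D (Suc n) = PH (k0 + Suc n) (D n)" for n unfolding D_def by simp
  have inv: "D n \<in> chain_recurrent_set f X \<and> AR k0 v (D n) \<and> (\<forall>k'. k0 \<le> k' \<and> k' \<le> k0 + n \<longrightarrow> AR k' (D n) (D n))" for n
  proof (induction n)
    case 0
    have "PH k0 v \<in> chain_recurrent_set f X \<and> AR k0 v (PH k0 v) \<and> AR k0 (PH k0 v) (PH k0 v)"
      using PH[OF vX vv] by blast
    then show ?case using D0 by (metis add_0_right le_antisym)
  next
    case (Suc n)
    have a: "D n \<in> X" "cc (Suc (k0 + Suc n)) (D n) (D n)" using Suc CR_cc by blast+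
    note P = PH[OF a, unfolded DS[symmetric]]
    have RRn: "RR (Suc (k0 + n)) (D n) (D (Suc n))" using P by simp
    have "RR k0 (D n) (D (Suc n))" using RR_mono[OF RRn] by simp
    then have "AR k0 v (D (Suc n))" using AR_RR_comp[of k0 v "D n" "D (Suc n)"] Suc by blast
    moreover have "AR k' (D (Suc n)) (D (Suc n))" if k': "k0 \<le> k'" "k' \<le> k0 + Suc n" for k'
    proof (cases "k' = k0 + Suc n")
      case True then show ?thesis using P by simp
    next
      case False
      then have k'': "k' \<le> k0 + n" using k' by simp
      have DX': "D (Suc n) \<in> X" using P CR_cc by blast
      have "ceq (Suc k') (D n) (D (Suc n))" using ceq_mono[of "k0 + Suc n" "D n" "D (Suc n)" "Suc k'"] P k'' a(1) DX' by simp
      then have "AA k' (D (Suc n)) (D n)" using ceq_AA a(1) DX' by blast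
      moreover have "AR k' (D n) (D n)" using Suc k'(1) k'' by blast
      ultimately have "AR k' (D (Suc n)) (D n)" using AA_AR by blast
      moreover have "RR k' (D n) (D (Suc n))" using RR_mono[OF RRn] k'' by simp
      ultimately show ?thesis using AR_RR_comp by blast
    qed
    ultimately show ?case using P by blast
  qed
  have DX: "D n \<in> X" for n using inv CR_cc by blast
  have Dceq1: "ceq (k0 + Suc n) (D n) (D (Suc n))" for n
  proof -
    have "D n \<in> X" "cc (Suc (k0 + Suc n)) (D n) (D n)" using inv CR_cc by blast+
    then show ?thesis using PH DS by simp
  qed
  have Dceq: "ceq i (D n) (D m)" if "n \<le> m" "i \<le> k0 + Suc n" for i n m
    using that(1)
  proof (induction m rule: dec_induct)
    case base
    have "cc i (D n) (D n)" using inv CR_cc by blast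
    then show ?case unfolding ceq_def by simp
  next
    case (step m)
    have "ceq i (D m) (D (Suc m))" using ceq_mono[OF Dceq1[of m] _ DX DX, of i] that(2) step(1) by simp
    then show ?case using ceq_trans[OF DX DX DX step(3)] by blast
  qed
  obtain r x0 where r: "strict_mono r" "x0 \<in> X" "(D \<circ> r) \<longlonglongrightarrow> x0" using seq_sub[of D] DX by blast
  have rge: "\<And>n. r n \<ge> n" using seq_suble[OF r(1)] by blast
  have rlim: "(\<lambda>n. D (r n)) \<longlonglongrightarrow> x0" using r(3) by (simp add: o_def)
  have L1: "ceq i (D n) x0" if "i \<le> n" for i n
  proof -
    obtain M where M: "\<forall>n\<ge>M. D (r n) \<in> cs i x0" using cell_eventually[OF r(2) _ rlim] DX by blast
    define n' where "n' = r (max M n)"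
    have "n \<le> n'" using rge[of "max M n"] unfolding n'_def by simp
    then have "ceq i (D n) (D n')" using Dceq that by simp
    moreover have "x0 \<in> cs i (D n')" using M csym[OF r(2)] unfolding n'_def by simp
    ultimately show ?thesis using ceq_cell2[OF DX] by blast
  qed
  have x0CR: "x0 \<in> chain_recurrent_set f X"
  proof -
    have "cc i x0 x0" for i using L1[of i i] cc_trans[OF r(2) DX r(2)] unfolding ceq_def by blast
    then show ?thesis using CR_iff r(2) by blast
  qed
  have "AR k0 v x0"
    unfolding AR_def
  proof (intro allI impI)
    fix z assume z: "Apath (Suc k0) v z"
    have zX: "z i \<in> X" for i using z unfolding Apath_def path_def by blast
    have "\<exists>y. chain_equiv f X (D n) y \<and> realizes k0 y z" for n using inv[of n] z unfolding AR_def by blast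
    then show "\<exists>y. chain_equiv f X x0 y \<and> realizes k0 y z"
      using LIM[where D=D and xl=x0 and z=z and nb=0 and k=k0] DX r(2) L1 zX by blast
  qed
  moreover have "AR k x0 x0" if k: "k \<ge> k0" for k
    unfolding AR_def
  proof (intro allI impI)
    fix z assume z: "Apath (Suc k) x0 z"
    have zX: "z i \<in> X" for i using z unfolding Apath_def path_def by blast
    have "\<exists>y. chain_equiv f X (D n) y \<and> realizes k y z" if n: "n \<ge> Suc k" for n
    proof -
      have "ceq (Suc k) (D n) x0" using L1 n by blast
      then have "AA k x0 (D n)" using ceq_AA DX r(2) by blast
      moreover have "AR k (D n) (D n)" using inv[of n] k n by simp
      ultimately have "AR k x0 (D n)" using AA_AR by blast
      then show ?thesis using z unfolding AR_def by blast
    qed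
    then show "\<exists>y. chain_equiv f X x0 y \<and> realizes k y z"
      using LIM[where D=D and xl=x0 and z=z and nb="Suc k" and k=k] DX r(2) L1 zX by blast
  qed
  ultimately show ?thesis using x0CR by blast
qed

end

locale lgraph =
  fixes V :: "'v set" and E :: "'v \<Rightarrow> 'v \<Rightarrow> bool" and lab :: "'v \<Rightarrow> 'l"
  assumes finV: "finite V"
begin

definition gpath :: "'v list \<Rightarrow> bool" where
  "gpath p \<longleftrightarrow> p \<noteq> [] \<and> set p \<subseteq> V \<and> successively E p"

definition Rch :: "'v \<Rightarrow> 'v \<Rightarrow> bool" where
  "Rch a b \<longleftrightarrow> (\<exists>c. gpath c \<and> hd c = a \<and> last c = b)"

definition NoHS :: bool where
  "NoHS \<longleftrightarrow> (\<forall>p q. gpath p \<and> gpath q \<and> length p = length q \<and> hd p = hd q \<and> last p = hd p \<and> last q = hd q \<longrightarrow> map lab p = map lab q)"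

definition W :: "'v \<Rightarrow> nat \<Rightarrow> 'l list set" where
  "W v n = map lab ` {p. gpath p \<and> hd p = v \<and> length p = Suc n}"

definition Reach :: "'v \<Rightarrow> 'v set" where
  "Reach v = {w. Rch v w}"

lemma gpath_append:
  assumes "gpath p" "gpath q" "E (last p) (hd q)" shows "gpath (p @ q)"
  using assms unfolding gpath_def by (auto simp: successively_append_iff)

lemma gpath_take: assumes "gpath p" "m > 0" shows "gpath (take m p)"
proof -
  have "successively E (take m p @ drop m p)" using assms unfolding gpath_def by simp
  then have "successively E (take m p)" unfolding successively_append_iff by blast
  moreover have "set (take m p) \<subseteq> V" using assms(1) set_take_subset[of m p] unfolding gpath_def by (meson order_trans)
  moreover have "take m p \<noteq> []" using assms unfolding gpath_def by simp
  ultimately show ?thesis unfolding gpath_def by blast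
qed

lemma gpath_drop: assumes "gpath p" "m < length p" shows "gpath (drop m p)"
proof -
  have "successively E (take m p @ drop m p)" using assms unfolding gpath_def by simp
  then have "successively E (drop m p)" unfolding successively_append_iff by blast
  moreover have "set (drop m p) \<subseteq> V" using assms(1) set_drop_subset[of m p] unfolding gpath_def by (meson order_trans)
  moreover have "drop m p \<noteq> []" using assms unfolding gpath_def by simp
  ultimately show ?thesis unfolding gpath_def by blast
qed

lemma last_take_nth: "i < length p \<Longrightarrow> last (take (Suc i) p) = p ! i"
  by (simp add: take_Suc_conv_app_nth)

lemma Rch_refl: "v \<in> V \<Longrightarrow> Rch v v"
  unfolding Rch_def gpath_def by (intro exI[of _ "[v]"]) simp

lemma Rch_trans: assumes "Rch a b" "Rch b c" shows "Rch a c"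
proof -
  obtain p where p: "gpath p" "hd p = a" "last p = b" using assms(1) unfolding Rch_def by blast
  obtain q where q: "gpath q" "hd q = b" "last q = c" using assms(2) unfolding Rch_def by blast
  show ?thesis
  proof (cases "tl q = []")
    case True
    then have "q = [b]" using q gpath_def by (metis hd_Cons_tl)
    then show ?thesis using p q unfolding Rch_def by auto
  next
    case False
    have sq: "successively E (hd q # tl q)" using q(1) unfolding gpath_def by simp
    then have e: "E b (hd (tl q))" using q(2) False by (cases "tl q") (auto simp: successively_Cons)
    have "1 < length q" using False by (cases q) auto
    then have "gpath (drop 1 q)" using gpath_drop[OF q(1), of 1] by simp
    then have "gpath (tl q)" by (simp add: drop_Suc)
    then have "gpath (p @ tl q)" using gpath_append[OF p(1)] e p(3) by simp
    moreover have "hd (p @ tl q) = a" using p unfolding gpath_def by simp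
    moreover have "last (tl q) = last q" using last_tl[of q] False by blast
    then have "last (p @ tl q) = c" using q(3) False by simp
    ultimately show ?thesis unfolding Rch_def by blast
  qed
qed

lemma Rch_V: "Rch a b \<Longrightarrow> a \<in> V \<and> b \<in> V"
  unfolding Rch_def gpath_def by auto

lemma Reach_V: "Reach v \<subseteq> V" unfolding Reach_def using Rch_V by blast

lemma completion:
  assumes nh: NoHS and p: "gpath p" and q: "gpath q" and len: "length p = length q"
    and hd: "hd p = hd q" and lst: "last p = last q" and R: "Rch (last p) (hd p)"
  shows "map lab p = map lab q"
proof -
  obtain c where c: "gpath c" "hd c = last p" "last c = hd p" using R unfolding Rch_def by blast
  have ext: "gpath (r @ tl c) \<and> hd (r @ tl c) = hd p \<and> last (r @ tl c) = hd p" if r: "gpath r" "hd r = hd p" "last r = last p" for r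
  proof (cases "tl c = []")
    case True
    then have "c = [last p]" using c gpath_def by (metis hd_Cons_tl)
    then show ?thesis using r c by simp
  next
    case False
    have sc: "successively E (hd c # tl c)" using c(1) unfolding gpath_def by simp
    then have e: "E (last p) (hd (tl c))" using c(2) False by (cases "tl c") (auto simp: successively_Cons)
    have "1 < length c" using False by (cases c) auto
    then have "gpath (drop 1 c)" using gpath_drop[OF c(1), of 1] by simp
    then have "gpath (tl c)" by (simp add: drop_Suc)
    then have "gpath (r @ tl c)" using gpath_append[OF r(1)] e r(3) by simp
    moreover have "hd (r @ tl c) = hd p" using r unfolding gpath_def by simp
    moreover have "last (tl c) = last c" using last_tl[of c] False by blast
    then have "last (r @ tl c) = hd p" using c(3) False by simp
    ultimately show ?thesis by blast
  qed
  have a: "gpath (p @ tl c) \<and> hd (p @ tl c) = hd p \<and> last (p @ tl c) = hd p" using ext[OF p] by simp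
  have b: "gpath (q @ tl c) \<and> hd (q @ tl c) = hd p \<and> last (q @ tl c) = hd p" using ext[OF q] hd lst by simp
  have "map lab (p @ tl c) = map lab (q @ tl c)"
    using nh[unfolded NoHS_def, rule_format, of "p @ tl c" "q @ tl c"] a b len by simp
  then show ?thesis using len by simp
qed

lemma W_finite: "finite (W v n)"
proof -
  have "{p. gpath p \<and> hd p = v \<and> length p = Suc n} \<subseteq> {xs. set xs \<subseteq> V \<and> length xs = Suc n}"
    unfolding gpath_def by blast
  then show ?thesis unfolding W_def using finite_lists_length_eq[OF finV] finite_subset by blast
qed

lemma W_bound:
  assumes nh: NoHS
  shows "v \<in> V \<Longrightarrow> card (W v n) \<le> ((card V + 1)^2 * (n+1)) ^ card (Reach v)"
proof (induction "card (Reach v)" arbitrary: v n rule: less_induct)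
  case less
  define N where "N = card V"
  define Q where "Q m = (N + 1)^2 * (m+1)" for m
  define r where "r = card (Reach v)"
  have finR: "finite (Reach w)" for w using Reach_V finV finite_subset by blast
  have vR: "v \<in> Reach v" using Rch_refl[OF less.prems] unfolding Reach_def by simp
  have r1: "r \<ge> 1" unfolding r_def using vR finR[of v] by (metis One_nat_def Suc_leI card_gt_0_iff empty_iff)
  define F where "F w l = map lab (SOME p. gpath p \<and> hd p = v \<and> last p = w \<and> length p = Suc l)" for w l
  have Fp: "map lab p = F (last p) (length p - 1)" if p: "gpath p" "hd p = v" "Rch (last p) v" for p
  proof -
    have ex: "\<exists>p'. gpath p' \<and> hd p' = v \<and> last p' = last p \<and> length p' = Suc (length p - 1)"
      using p by (intro exI[of _ p]) (auto simp: gpath_def)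
    define p' where "p' = (SOME p'. gpath p' \<and> hd p' = v \<and> last p' = last p \<and> length p' = Suc (length p - 1))"
    have p': "gpath p' \<and> hd p' = v \<and> last p' = last p \<and> length p' = Suc (length p - 1)"
      unfolding p'_def using ex by (rule someI_ex)
    have "length p = length p'" using p' p(1) unfolding gpath_def by simp
    moreover have "gpath p'" "hd p = hd p'" "last p = last p'" using p' p(2) by auto
    moreover have "Rch (last p) (hd p)" using p(2,3) by simp
    ultimately have "map lab p = map lab p'" using completion[OF nh p(1)] by blast
    then show ?thesis unfolding F_def p'_def by simp
  qed
  define U where "U = {u\<in>V. Rch v u \<and> \<not> Rch u v}"
  have U_lt: "card (Reach u) < card (Reach v)" if "u \<in> U" for u
  proof -
    have "Reach u \<subseteq> Reach v" using that Rch_trans unfolding U_def Reach_def by blast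
    moreover have "v \<notin> Reach u" using that unfolding U_def Reach_def by blast
    ultimately have "Reach u \<subset> Reach v" using vR by blast
    then show ?thesis using finR psubset_card_mono by blast
  qed
  have IH: "card (W u m) \<le> Q n ^ (r - 1)" if "u \<in> U" "m \<le> n" for u m
  proof -
    have uV: "u \<in> V" using that unfolding U_def by blast
    have "card (W u m) \<le> ((card V + 1)^2 * (m+1)) ^ card (Reach u)" using less.hyps[OF U_lt[OF that(1)] uV] .
    also have "\<dots> \<le> Q n ^ card (Reach u)" unfolding Q_def N_def using that(2) by (intro power_mono) auto
    also have "\<dots> \<le> Q n ^ (r - 1)"
    proof (rule power_increasing)
      show "card (Reach u) \<le> r - 1" using U_lt[OF that(1)] unfolding r_def by simp
      have "1 \<le> (N+1)^2" by simp
      then show "1 \<le> Q n" unfolding Q_def by (metis mult_le_mono le_add2 nat_mult_1 One_nat_def Suc_eq_plus1)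
    qed
    finally show ?thesis .
  qed
  define A1 where "A1 = (\<lambda>w. F w n) ` V"
  define A2 where "A2 = (\<Union>l\<in>{..<n}. \<Union>w\<in>V. \<Union>u\<in>U. (\<lambda>s. F w l @ s) ` W u (n - Suc l))"
  have sub: "W v n \<subseteq> A1 \<union> A2"
  proof
    fix s assume "s \<in> W v n"
    then obtain p where p: "gpath p" "hd p = v" "length p = Suc n" "s = map lab p" unfolding W_def by blast
    define P where "P i \<longleftrightarrow> i \<le> n \<and> Rch (p ! i) v" for i
    have P0: "P 0" unfolding P_def using Rch_refl[OF less.prems] p(2) p(1) unfolding gpath_def by (simp add: hd_conv_nth)
    define l where "l = Greatest P"
    have Pl: "P l" unfolding l_def using GreatestI_nat[of P 0 n] P0 unfolding P_def by blast
    have lmax: "\<And>i. P i \<Longrightarrow> i \<le> l" unfolding l_def using Greatest_le_nat[of P _ n] unfolding P_def by blast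
    have pre: "gpath (take (Suc l) p)" using gpath_take[OF p(1)] by simp
    have pre_hd: "hd (take (Suc l) p) = v" using p(2) by simp
    have "l < length p" using Pl p(3) unfolding P_def by simp
    then have pre_last: "last (take (Suc l) p) = p ! l" by (rule last_take_nth)
    have pre_len: "length (take (Suc l) p) - 1 = l" using Pl p(3) unfolding P_def by simp
    have preF: "map lab (take (Suc l) p) = F (p ! l) l"
      using Fp[OF pre pre_hd] pre_last pre_len Pl unfolding P_def by simp
    have plV: "p ! l \<in> V" using p(1) Pl p(3) unfolding gpath_def P_def by (metis le_imp_less_Suc nth_mem subsetD)
    show "s \<in> A1 \<union> A2"
    proof (cases "l = n")
      case True
      then have "take (Suc l) p = p" using p(3) by simp
      then have "s = F (p ! n) n" using preF p(4) True by simp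
      then show ?thesis unfolding A1_def using plV True by blast
    next
      case False
      then have ln: "l < n" using Pl unfolding P_def by simp
      define u where "u = p ! Suc l"
      have suf: "gpath (drop (Suc l) p)" using gpath_drop[OF p(1)] ln p(3) by simp
      have suf_hd: "hd (drop (Suc l) p) = u" unfolding u_def using ln p(3) by (simp add: hd_drop_conv_nth)
      have suf_len: "length (drop (Suc l) p) = Suc (n - Suc l)" using ln p(3) by simp
      have sW: "map lab (drop (Suc l) p) \<in> W u (n - Suc l)" unfolding W_def using suf suf_hd suf_len by blast
      have uV: "u \<in> V" using p(1) ln p(3) unfolding gpath_def u_def by (metis Suc_mono nth_mem subsetD)
      have "Rch v u"
      proof -
        have "gpath (take (Suc (Suc l)) p)" using gpath_take[OF p(1)] by simp
        moreover have "hd (take (Suc (Suc l)) p) = v" using p(2) by simp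
        moreover have "last (take (Suc (Suc l)) p) = u" unfolding u_def using ln p(3) last_take_nth[of "Suc l" p] by simp
        ultimately show ?thesis unfolding Rch_def by blast
      qed
      moreover have "\<not> Rch u v"
      proof
        assume "Rch u v"
        then have "P (Suc l)" unfolding P_def u_def using ln by simp
        then show False using lmax by fastforce
      qed
      ultimately have uU: "u \<in> U" unfolding U_def using uV by blast
      have "s = F (p ! l) l @ map lab (drop (Suc l) p)"
        using p(4) preF by (metis append_take_drop_id map_append)
      then show ?thesis unfolding A2_def using ln plV uU sW by blast
    qed
  qed
  have cA1: "card A1 \<le> N" unfolding A1_def N_def by (rule card_image_le[OF finV])
  have finU: "finite U" unfolding U_def using finV by simp
  have cU: "card U \<le> N" unfolding N_def U_def using finV by (intro card_mono) auto
  have cA2: "card A2 \<le> n * (N * (N * Q n ^ (r - 1)))"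
  proof -
    have "card A2 \<le> (\<Sum>l\<in>{..<n}. card (\<Union>w\<in>V. \<Union>u\<in>U. (\<lambda>s. F w l @ s) ` W u (n - Suc l)))"
      unfolding A2_def by (rule card_UN_le) simp
    also have "\<dots> \<le> (\<Sum>l\<in>{..<n}. N * (N * Q n ^ (r - 1)))"
    proof (rule sum_mono)
      fix l assume l: "l \<in> {..<n}"
      have "card (\<Union>w\<in>V. \<Union>u\<in>U. (\<lambda>s. F w l @ s) ` W u (n - Suc l)) \<le> (\<Sum>w\<in>V. card (\<Union>u\<in>U. (\<lambda>s. F w l @ s) ` W u (n - Suc l)))"
        by (rule card_UN_le[OF finV])
      also have "\<dots> \<le> (\<Sum>w\<in>V. N * Q n ^ (r - 1))"
      proof (rule sum_mono)
        fix w assume "w \<in> V"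
        have "card (\<Union>u\<in>U. (\<lambda>s. F w l @ s) ` W u (n - Suc l)) \<le> (\<Sum>u\<in>U. card ((\<lambda>s. F w l @ s) ` W u (n - Suc l)))"
          by (rule card_UN_le[OF finU])
        also have "\<dots> \<le> (\<Sum>u\<in>U. Q n ^ (r - 1))"
        proof (rule sum_mono)
          fix u assume "u \<in> U"
          have "card ((\<lambda>s. F w l @ s) ` W u (n - Suc l)) \<le> card (W u (n - Suc l))" by (rule card_image_le[OF W_finite])
          also have "\<dots> \<le> Q n ^ (r - 1)" using IH[OF \<open>u \<in> U\<close>] by simp
          finally show "card ((\<lambda>s. F w l @ s) ` W u (n - Suc l)) \<le> Q n ^ (r - 1)" .
        qed
        also have "\<dots> = card U * Q n ^ (r - 1)" by simp
        also have "\<dots> \<le> N * Q n ^ (r - 1)" using cU by (simp add: mult_right_mono)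
        finally show "card (\<Union>u\<in>U. (\<lambda>s. F w l @ s) ` W u (n - Suc l)) \<le> N * Q n ^ (r - 1)" .
      qed
      also have "\<dots> = N * (N * Q n ^ (r - 1))" unfolding N_def by simp
      finally show "card (\<Union>w\<in>V. \<Union>u\<in>U. (\<lambda>s. F w l @ s) ` W u (n - Suc l)) \<le> N * (N * Q n ^ (r - 1))" .
    qed
    also have "\<dots> = n * (N * (N * Q n ^ (r - 1)))" by simp
    finally show ?thesis .
  qed
  have finA1: "finite A1" unfolding A1_def using finV by simp
  have finA2: "finite A2" unfolding A2_def using finV finU W_finite by simp
  have "card (W v n) \<le> card (A1 \<union> A2)" using sub finA1 finA2 by (intro card_mono) auto
  also have "\<dots> \<le> card A1 + card A2" by (rule card_Un_le)
  also have "\<dots> \<le> N + n * (N * (N * Q n ^ (r - 1)))" using cA1 cA2 by simp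
  also have "\<dots> \<le> Q n ^ r"
  proof -
    have "1 \<le> Q n" unfolding Q_def by (metis mult_le_mono le_add2 nat_mult_1 One_nat_def Suc_eq_plus1 one_le_power)
    then have q1: "1 \<le> Q n ^ (r - 1)" by simp
    have "N + n * (N * (N * Q n ^ (r - 1))) \<le> N * Q n ^ (r - 1) + n * (N * (N * Q n ^ (r - 1)))"
      using q1 by simp
    also have "\<dots> = (N + n * N * N) * Q n ^ (r - 1)" by (simp add: algebra_simps)
    also have "\<dots> \<le> Q n * Q n ^ (r - 1)"
    proof (rule mult_right_mono)
      have "N + n * N * N \<le> (N + 1) * (N + 1) * (n + 1)" by (simp add: algebra_simps)
      then show "N + n * N * N \<le> Q n" unfolding Q_def by (simp add: power2_eq_square)
    qed simp
    also have "\<dots> = Q n ^ r" using r1 by (metis Suc_diff_1 less_le_trans power_Suc zero_less_one)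
    finally show ?thesis .
  qed
  finally show ?case unfolding Q_def N_def r_def .
qed

definition Tw :: "nat \<Rightarrow> 'l list set" where
  "Tw n = map lab ` {p. gpath p \<and> length p = Suc n}"

lemma Tw_bound:
  assumes nh: NoHS
  shows "card (Tw n) \<le> card V * ((card V + 1)^2 * (n+1)) ^ card V"
proof -
  define Q where "Q = (card V + 1)^2 * (n+1)"
  have "Tw n \<subseteq> (\<Union>v\<in>V. W v n)"
  proof
    fix s assume "s \<in> Tw n"
    then obtain p where p: "gpath p" "length p = Suc n" "s = map lab p" unfolding Tw_def by blast
    then have "hd p \<in> V" unfolding gpath_def by (metis hd_in_set subsetD)
    then show "s \<in> (\<Union>v\<in>V. W v n)" unfolding W_def using p by blast
  qed
  then have "card (Tw n) \<le> card (\<Union>v\<in>V. W v n)" using finV W_finite by (intro card_mono) auto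
  also have "\<dots> \<le> (\<Sum>v\<in>V. card (W v n))" by (rule card_UN_le[OF finV])
  also have "\<dots> \<le> (\<Sum>v\<in>V. Q ^ card V)"
  proof (rule sum_mono)
    fix v assume v: "v \<in> V"
    have "card (W v n) \<le> Q ^ card (Reach v)" using W_bound[OF nh v] unfolding Q_def .
    also have "\<dots> \<le> Q ^ card V"
    proof (rule power_increasing)
      show "card (Reach v) \<le> card V" using card_mono[OF finV Reach_V] .
      show "1 \<le> Q" unfolding Q_def by (metis mult_le_mono le_add2 nat_mult_1 One_nat_def Suc_eq_plus1 one_le_power)
    qed
    finally show "card (W v n) \<le> Q ^ card V" .
  qed
  also have "\<dots> = card V * Q ^ card V" by simp
  finally show ?thesis unfolding Q_def .
qed

end

lemma max_sep_le:
  assumes "\<And>E. finite E \<Longrightarrow> separated_set f K n \<epsilon> E \<Longrightarrow> real (card E) \<le> B"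
  shows "max_sep f K n \<epsilon> \<le> B"
  unfolding max_sep_def
proof (rule cSup_least)
  have "separated_set f K n \<epsilon> {}" unfolding separated_set_def by simp
  then show "{real (card E) |E. finite E \<and> separated_set f K n \<epsilon> E} \<noteq> {}" by blast
  show "\<And>x. x \<in> {real (card E) |E. finite E \<and> separated_set f K n \<epsilon> E} \<Longrightarrow> x \<le> B"
    using assms by blast
qed

lemma max_sep_ge:
  assumes "\<And>E. finite E \<Longrightarrow> separated_set f K n \<epsilon> E \<Longrightarrow> real (card E) \<le> B"
    and "finite E0" "separated_set f K n \<epsilon> E0"
  shows "real (card E0) \<le> max_sep f K n \<epsilon>"
  unfolding max_sep_def
proof (rule cSup_upper)
  show "real (card E0) \<in> {real (card E) |E. finite E \<and> separated_set f K n \<epsilon> E}" using assms(2,3) by blast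
  show "bdd_above {real (card E) |E. finite E \<and> separated_set f K n \<epsilon> E}"
    unfolding bdd_above_def using assms(1) by blast
qed

lemma ln_le_nat: "0 \<le> x \<Longrightarrow> x \<le> real (N::nat) \<Longrightarrow> ln x \<le> ln (real N)"
proof (cases "x = 0")
  case True
  assume "x \<le> real N"
  show ?thesis
  proof (cases "N = 0")
    case True then show ?thesis using \<open>x = 0\<close> by simp
  next
    case False then have "real N \<ge> 1" by simp
    then show ?thesis using \<open>x = 0\<close> by simp
  qed
next
  case False
  assume "0 \<le> x" "x \<le> real N"
  then show ?thesis using False by simp
qed

context lev begin

definition HS :: "nat \<Rightarrow> (nat \<Rightarrow> 'a) \<Rightarrow> (nat \<Rightarrow> 'a) \<Rightarrow> nat \<Rightarrow> bool" where
  "HS k0 a b L \<longleftrightarrow> L > 0 \<and> (\<forall>i\<le>L. a i \<in> X \<and> b i \<in> X) \<and>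
    (\<forall>i<L. f (a i) \<in> cs (Suc k0) (a (Suc i)) \<and> f (b i) \<in> cs (Suc k0) (b (Suc i))) \<and>
    a L = a 0 \<and> b 0 \<in> cs (Suc k0) (a 0) \<and> b L \<in> cs (Suc k0) (a 0) \<and> (\<exists>i<L. cs k0 (a i) \<noteq> cs k0 (b i))"

lemma horseshoe_exists:
  assumes hpos: "htop f X > 0"
  shows "\<exists>k0 a b L. HS k0 a b L"
proof (rule ccontr)
  assume nhs: "\<not> (\<exists>k0 a b L. HS k0 a b L)"
  obtain \<gamma> where \<gamma>: "\<gamma> > 0" "limsup (\<lambda>n. ereal (ln (max_sep f X n \<gamma>) / real n)) > 0"
    using hpos unfolding htop_def less_SUP_iff by auto
  obtain k0 where k0: "inverse (real (Suc k0)) < \<gamma>" using reals_Archimedean[OF \<gamma>(1)] by blast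
  define m where "m = Suc k0"
  have k0m: "k0 \<le> m" unfolding m_def by simp
  define V where "V = cs m ` X"
  define E where "E A B \<longleftrightarrow> (\<exists>x\<in>A. f x \<in> B)" for A B
  define lab where "lab A = cs k0 (SOME x. x \<in> A)" for A
  have finV: "finite V" unfolding V_def by (rule cfin)
  interpret g: lgraph V E lab by unfold_locales (rule finV)
  have labc: "lab (cs m x) = cs k0 x" if "x \<in> X" for x
  proof -
    have "\<exists>y. y \<in> cs m x" using cself[OF that] by blast
    then have "(SOME y. y \<in> cs m x) \<in> cs m x" by (rule someI_ex)
    then have "(SOME y. y \<in> cs m x) \<in> cs k0 x" using cmono'[OF that k0m] by blast
    then show ?thesis unfolding lab_def using ceqc[OF that] by simp
  qed
  have Vcell: "A = cs m y \<and> y \<in> X" if Ay: "A \<in> V" "y \<in> A" for A y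
  proof -
    obtain x where x: "x \<in> X" "A = cs m x" using Ay(1) unfolding V_def by blast
    then show ?thesis using ceqc[OF x(1)] csub[OF x(1)] Ay(2) by auto
  qed
  have nh: g.NoHS
    unfolding g.NoHS_def
  proof (intro allI impI)
    fix p q assume pq: "g.gpath p \<and> g.gpath q \<and> length p = length q \<and> hd p = hd q \<and> last p = hd p \<and> last q = hd q"
    show "map lab p = map lab q"
    proof (rule ccontr)
      assume ne: "map lab p \<noteq> map lab q"
      have gp: "p \<noteq> []" "set p \<subseteq> V" "successively E p" using pq unfolding g.gpath_def by auto
      have gq: "q \<noteq> []" "set q \<subseteq> V" "successively E q" using pq unfolding g.gpath_def by auto
      have len: "length p = length q" using pq by blast
      define L where "L = length p - 1"
      have lp: "length p > 0" using gp(1) by simp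
      have lenL: "length p = Suc L" "length q = Suc L" using lp len unfolding L_def by linarith+
      obtain i where i: "i < length p" "lab (p!i) \<noteq> lab (q!i)"
        using ne len by (metis nth_equalityI length_map nth_map)
      have pL: "p ! L = p ! 0" using pq gp(1) lenL by (metis diff_Suc_1 hd_conv_nth last_conv_nth)
      have qL: "q ! L = p ! 0" using pq gp(1) gq(1) lenL by (metis diff_Suc_1 hd_conv_nth last_conv_nth)
      have q0: "q ! 0 = p ! 0" using pq gp(1) gq(1) by (metis hd_conv_nth)
      have iL: "i < L" using i pL qL lenL by (metis less_Suc_eq)
      then have L0: "L > 0" by simp
      have pV: "p ! j \<in> V" if "j \<le> L" for j using gp(2) lenL that by (metis le_imp_less_Suc nth_mem subsetD)
      have qV: "q ! j \<in> V" if "j \<le> L" for j using gq(2) lenL that by (metis le_imp_less_Suc nth_mem subsetD)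
      define a where "a j = (SOME x. x \<in> p ! (j mod L) \<and> f x \<in> p ! Suc (j mod L))" for j
      define b where "b j = (SOME x. x \<in> q ! (j mod L) \<and> f x \<in> q ! Suc (j mod L))" for j
      have a1: "a j \<in> p ! (j mod L) \<and> f (a j) \<in> p ! Suc (j mod L)" for j
      proof -
        have "j mod L < L" using L0 by simp
        then have "E (p ! (j mod L)) (p ! Suc (j mod L))" using successively_nth[OF gp(3)] lenL by simp
        then have "\<exists>x. x \<in> p ! (j mod L) \<and> f x \<in> p ! Suc (j mod L)" unfolding E_def by blast
        then show ?thesis unfolding a_def by (rule someI_ex)
      qed
      have b1: "b j \<in> q ! (j mod L) \<and> f (b j) \<in> q ! Suc (j mod L)" for j
      proof -
        have "j mod L < L" using L0 by simp
        then have "E (q ! (j mod L)) (q ! Suc (j mod L))" using successively_nth[OF gq(3)] lenL by simp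
        then have "\<exists>x. x \<in> q ! (j mod L) \<and> f x \<in> q ! Suc (j mod L)" unfolding E_def by blast
        then show ?thesis unfolding b_def by (rule someI_ex)
      qed
      have amod: "j mod L = j" "b j = b (j mod L)" "a j = a (j mod L)" if "j < L" for j using that by auto
      have aL: "a L = a 0" "b L = b 0" unfolding a_def b_def by simp_all
      have acell: "cs m (a j) = p ! j \<and> a j \<in> X" if "j \<le> L" for j
      proof (cases "j = L")
        case True
        have "a 0 \<in> p ! 0" using a1[of 0] L0 by simp
        then show ?thesis using True aL Vcell[OF pV[of 0]] pL by simp
      next
        case False
        then have "a j \<in> p ! j" using a1[of j] that by simp
        then show ?thesis using Vcell[OF pV[OF that]] by simp
      qed
      have bcell: "cs m (b j) = q ! j \<and> b j \<in> X" if "j \<le> L" for j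
      proof (cases "j = L")
        case True
        have "b 0 \<in> q ! 0" using b1[of 0] L0 by simp
        then show ?thesis using True aL Vcell[OF qV[of 0]] qL q0 by simp
      next
        case False
        then have "b j \<in> q ! j" using b1[of j] that by simp
        then show ?thesis using Vcell[OF qV[OF that]] by simp
      qed
      have "HS k0 a b L"
        unfolding HS_def
      proof (intro conjI)
        show "L > 0" by (rule L0)
        show "\<forall>i\<le>L. a i \<in> X \<and> b i \<in> X" using acell bcell by blast
        show "\<forall>i<L. f (a i) \<in> cs (Suc k0) (a (Suc i)) \<and> f (b i) \<in> cs (Suc k0) (b (Suc i))"
        proof (intro allI impI conjI)
          fix j assume j: "j < L"
          have "f (a j) \<in> p ! Suc j" using a1[of j] j by simp
          then show "f (a j) \<in> cs (Suc k0) (a (Suc j))" using acell[of "Suc j"] j unfolding m_def by simp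
          have "f (b j) \<in> q ! Suc j" using b1[of j] j by simp
          then show "f (b j) \<in> cs (Suc k0) (b (Suc j))" using bcell[of "Suc j"] j unfolding m_def by simp
        qed
        show "a L = a 0" by (rule aL(1))
        have "cs m (b 0) = cs m (a 0)" using acell[of 0] bcell[of 0] q0 by simp
        then show "b 0 \<in> cs (Suc k0) (a 0)" using cself bcell[of 0] unfolding m_def by (metis le0)
        then show "b L \<in> cs (Suc k0) (a 0)" using aL by simp
        have "cs k0 (a i) = lab (p ! i)" using acell[of i] iL labc by (metis less_imp_le)
        moreover have "cs k0 (b i) = lab (q ! i)" using bcell[of i] iL labc by (metis less_imp_le)
        ultimately show "\<exists>i<L. cs k0 (a i) \<noteq> cs k0 (b i)" using i(2) iL by metis
      qed
      then show False using nhs by blast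
    qed
  qed
  define Bn where "Bn n = card V * ((card V + 1)^2 * n) ^ card V" for n :: nat
  have cardbound: "real (card Es) \<le> real (Bn n)" if n: "n \<ge> 1" and Es: "finite Es" "separated_set f X n \<gamma> Es" for n Es
  proof -
    define itin where "itin x = map (\<lambda>i. cs k0 ((f ^^ i) x)) [0..<n]" for x
    have EX: "Es \<subseteq> X" using Es(2) unfolding separated_set_def by blast
    have inj: "inj_on itin Es"
    proof
      fix x y assume xy: "x \<in> Es" "y \<in> Es" "itin x = itin y"
      show "x = y"
      proof (rule ccontr)
        assume "x \<noteq> y"
        then obtain i where i: "i < n" "dist ((f ^^ i) x) ((f ^^ i) y) > \<gamma>"
          using Es(2) xy unfolding separated_set_def by blast
        have "cs k0 ((f ^^ i) x) = cs k0 ((f ^^ i) y)"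
          using xy(3) i(1) unfolding itin_def by (metis (no_types, lifting) add_0 diff_zero nth_map_upt)
        moreover have yX: "y \<in> X" "x \<in> X" using EX xy by auto
        moreover have "(f ^^ i) y \<in> cs k0 ((f ^^ i) y)" using cself[OF fnX[OF yX(1)]] .
        ultimately have "(f ^^ i) y \<in> cs k0 ((f ^^ i) x)" by simp
        then have "dist ((f ^^ i) x) ((f ^^ i) y) < inverse (real (Suc k0))" using mesh[OF fnX[OF yX(2)]] by blast
        then show False using i(2) k0 by simp
      qed
    qed
    have sub: "itin ` Es \<subseteq> g.Tw (n - 1)"
    proof
      fix s assume "s \<in> itin ` Es"
      then obtain x where x: "x \<in> Es" "s = itin x" by blast
      have xX: "x \<in> X" using x EX by blast
      define p where "p = map (\<lambda>i. cs m ((f ^^ i) x)) [0..<n]"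
      have "p \<noteq> []" unfolding p_def using n by simp
      moreover have "set p \<subseteq> V" unfolding p_def V_def using fnX[OF xX] by auto
      moreover have "successively E p"
        unfolding p_def successively_conv_nth
      proof (intro allI impI)
        fix i assume "Suc i < length (map (\<lambda>i. cs m ((f ^^ i) x)) [0..<n])"
        then have i: "Suc i < n" by simp
        have "(f ^^ i) x \<in> cs m ((f ^^ i) x)" using cself fnX xX by blast
        moreover have "f ((f ^^ i) x) \<in> cs m ((f ^^ Suc i) x)" using cself[OF fX[OF fnX[OF xX]]] by simp
        ultimately have "E (cs m ((f ^^ i) x)) (cs m ((f ^^ Suc i) x))" unfolding E_def by blast
        then show "E (map (\<lambda>i. cs m ((f ^^ i) x)) [0..<n] ! i) (map (\<lambda>i. cs m ((f ^^ i) x)) [0..<n] ! Suc i)"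
          using i by simp
      qed
      moreover have "length p = Suc (n - 1)" unfolding p_def using n by simp
      moreover have "map lab p = s" unfolding p_def x(2) itin_def using labc fnX[OF xX] by simp
      ultimately show "s \<in> g.Tw (n - 1)" unfolding g.Tw_def g.gpath_def by blast
    qed
    have finTw: "finite (g.Tw (n - 1))"
    proof -
      have "{p. g.gpath p \<and> length p = Suc (n - 1)} \<subseteq> {xs. set xs \<subseteq> V \<and> length xs = Suc (n - 1)}"
        unfolding g.gpath_def by blast
      then show ?thesis unfolding g.Tw_def using finite_lists_length_eq[OF finV] finite_subset by blast
    qed
    have "card Es = card (itin ` Es)" using card_image[OF inj] by simp
    also have "\<dots> \<le> card (g.Tw (n - 1))" by (rule card_mono[OF finTw sub])
    also have "\<dots> \<le> Bn n" using g.Tw_bound[OF nh, of "n - 1"] n unfolding Bn_def by simp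
    finally show "real (card Es) \<le> real (Bn n)" by simp
  qed
  have bnd: "max_sep f X n \<gamma> \<le> real (Bn n)" if n: "n \<ge> 1" for n
    using cardbound[OF n] by (rule max_sep_le)
  have ms0: "0 \<le> max_sep f X n \<gamma>" if n: "n \<ge> 1" for n
  proof -
    have "separated_set f X n \<gamma> {}" unfolding separated_set_def by simp
    then have "real (card ({}::'a set)) \<le> max_sep f X n \<gamma>" using max_sep_ge[OF cardbound[OF n]] by blast
    then show ?thesis by simp
  qed
  define g where "g n = ln (real (Bn n)) / real n" for n
  have ev: "eventually (\<lambda>n. ereal (ln (max_sep f X n \<gamma>) / real n) \<le> ereal (g n)) sequentially"
  proof (rule eventually_sequentiallyI[of 1])
    fix n :: nat assume n: "n \<ge> 1"
    have "ln (max_sep f X n \<gamma>) \<le> ln (real (Bn n))" using ln_le_nat[OF ms0[OF n] bnd[OF n]] .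
    then have "ln (max_sep f X n \<gamma>) / real n \<le> g n" unfolding g_def using n by (simp add: divide_right_mono)
    then show "ereal (ln (max_sep f X n \<gamma>) / real n) \<le> ereal (g n)" by simp
  qed
  have glim: "g \<longlonglongrightarrow> 0"
  proof (cases "card V = 0")
    case True
    then have "g = (\<lambda>n. 0)" unfolding g_def Bn_def by (auto simp: fun_eq_iff)
    then show ?thesis by simp
  next
    case False
    define cV where "cV = real (card V)"
    have cV: "cV \<ge> 1" unfolding cV_def using False by simp
    define c where "c = ln cV + cV * ln ((cV + 1)^2)"
    have "eventually (\<lambda>n. (c + cV * ln (real n)) / real n = g n) sequentially"
    proof (rule eventually_sequentiallyI[of 1])
      fix n :: nat assume n: "n \<ge> 1"
      have "real (Bn n) = cV * ((cV + 1)^2 * real n) ^ card V" unfolding Bn_def cV_def by (simp add: add.commute)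
      moreover have "ln (cV * ((cV + 1)^2 * real n) ^ card V) = ln cV + cV * (ln ((cV + 1)^2) + ln (real n))"
        using cV n by (simp add: ln_mult ln_realpow cV_def)
      ultimately show "(c + cV * ln (real n)) / real n = g n" unfolding g_def c_def by (simp add: algebra_simps)
    qed
    moreover have "(\<lambda>n. (c + cV * ln (real n)) / real n) \<longlonglongrightarrow> 0" by real_asymp
    ultimately show ?thesis using Lim_transform_eventually by blast
  qed
  have "limsup (\<lambda>n. ereal (ln (max_sep f X n \<gamma>) / real n)) \<le> limsup (\<lambda>n. ereal (g n))"
    by (rule Limsup_mono[OF ev])
  also have "\<dots> = 0"
  proof -
    have "(\<lambda>n. ereal (g n)) \<longlonglongrightarrow> ereal 0" using glim by simp
    then show ?thesis using lim_imp_Limsup[of sequentially "\<lambda>n. ereal (g n)" "ereal 0"] by (simp add: zero_ereal_def)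
  qed
  finally show False using \<gamma>(2) by simp
qed

end

lemma list_diff_idx:
  assumes "length w = N" "length w' = N" "w \<noteq> w'" shows "\<exists>l<N. w ! l \<noteq> w' ! l"
proof (rule ccontr)
  assume "\<not> ?thesis"
  then have "\<forall>l<N. w ! l = w' ! l" by blast
  then have "w = w'" using assms(1,2) by (intro nth_equalityI) auto
  with assms(3) show False by simp
qed

context lev begin

lemma sep_card_bound:
  assumes "\<gamma> > 0"
  shows "\<exists>k'. \<forall>K n E. K \<subseteq> X \<longrightarrow> finite E \<longrightarrow> separated_set f K n \<gamma> E \<longrightarrow> real (card E) \<le> real (card (cs k' ` X) ^ n)"
proof -
  obtain k' where k': "inverse (real (Suc k')) < \<gamma>" using reals_Archimedean[OF assms] by blast
  have "real (card E) \<le> real (card (cs k' ` X) ^ n)" if K: "K \<subseteq> X" and E: "finite E" "separated_set f K n \<gamma> E" for K n E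
  proof -
    define itin where "itin x = map (\<lambda>i. cs k' ((f ^^ i) x)) [0..<n]" for x
    have EX: "E \<subseteq> X" using E(2) K unfolding separated_set_def by blast
    have inj: "inj_on itin E"
    proof
      fix x y assume xy: "x \<in> E" "y \<in> E" "itin x = itin y"
      show "x = y"
      proof (rule ccontr)
        assume "x \<noteq> y"
        then obtain i where i: "i < n" "dist ((f ^^ i) x) ((f ^^ i) y) > \<gamma>"
          using E(2) xy unfolding separated_set_def by blast
        have "cs k' ((f ^^ i) x) = cs k' ((f ^^ i) y)"
          using xy(3) i(1) unfolding itin_def by (metis (no_types, lifting) add_0 diff_zero nth_map_upt)
        moreover have yX: "y \<in> X" "x \<in> X" using EX xy by auto
        moreover have "(f ^^ i) y \<in> cs k' ((f ^^ i) y)" using cself[OF fnX[OF yX(1)]] .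
        ultimately have "(f ^^ i) y \<in> cs k' ((f ^^ i) x)" by simp
        then have "dist ((f ^^ i) x) ((f ^^ i) y) < inverse (real (Suc k'))" using mesh[OF fnX[OF yX(2)]] by blast
        then show False using i(2) k' by simp
      qed
    qed
    have sub: "itin ` E \<subseteq> {xs. set xs \<subseteq> cs k' ` X \<and> length xs = n}"
    proof
      fix s assume "s \<in> itin ` E"
      then obtain x where x: "x \<in> E" "s = itin x" by blast
      have xX: "x \<in> X" using x EX by blast
      have "set s \<subseteq> cs k' ` X" unfolding x(2) itin_def using fnX[OF xX] by auto
      then show "s \<in> {xs. set xs \<subseteq> cs k' ` X \<and> length xs = n}" unfolding x(2) itin_def by simp
    qed
    have "card E = card (itin ` E)" using card_image[OF inj] by simp
    also have "\<dots> \<le> card {xs. set xs \<subseteq> cs k' ` X \<and> length xs = n}"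
      by (rule card_mono[OF finite_lists_length_eq[OF cfin] sub])
    also have "\<dots> = card (cs k' ` X) ^ n" by (rule card_lists_length_eq[OF cfin])
    finally show ?thesis by simp
  qed
  then show ?thesis by blast
qed

lemma final_component:
  assumes hs: "HS k0 a b L"
  shows "\<exists>C \<in> chain_components f X. shadowing f C \<and> htop f C > 0"
proof -
  have L0: "L > 0" and aX: "\<And>i. i \<le> L \<Longrightarrow> a i \<in> X" and bX: "\<And>i. i \<le> L \<Longrightarrow> b i \<in> X"
    and ap: "\<And>i. i < L \<Longrightarrow> f (a i) \<in> cs (Suc k0) (a (Suc i))"
    and bp: "\<And>i. i < L \<Longrightarrow> f (b i) \<in> cs (Suc k0) (b (Suc i))"
    and aL: "a L = a 0" and b0: "b 0 \<in> cs (Suc k0) (a 0)" and bL: "b L \<in> cs (Suc k0) (a 0)"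
    and dif: "\<exists>i<L. cs k0 (a i) \<noteq> cs k0 (b i)"
    using hs unfolding HS_def by auto
  define v where "v = a 0"
  have a0: "a 0 = v" by (simp add: v_def)
  have vX: "v \<in> X" using aX[of 0] a0 by simp
  have b0': "b 0 \<in> cs (Suc k0) v" using b0 a0 by simp
  have bL': "b L \<in> cs (Suc k0) v" using bL a0 by simp
  have aL': "a L = v" using aL a0 by simp
  have aX': "\<forall>i\<le>L. a i \<in> X" "\<forall>i<L. f (a i) \<in> cs (Suc k0) (a (Suc i))" using aX ap by auto
  have bX': "\<forall>i\<le>L. b i \<in> X" "\<forall>i<L. f (b i) \<in> cs (Suc k0) (b (Suc i))" using bX bp by auto
  have vv: "cc (Suc k0) v v" using cc_sub[OF aX' L0 le_refl] aL' a0 by simp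
  have vb0: "cc (Suc k0) v (b 0)" using cc_cell2[OF vX b0' vv] .
  have b0v: "cc (Suc k0) (b 0) v" using cc_cell1[OF vX b0' vv] .
  have ceqa: "ceq (Suc k0) v (a i)" if "i < L" for i
  proof -
    have "cc (Suc k0) v (a i)"
    proof (cases "i = 0")
      case True then show ?thesis using vv a0 by simp
    next
      case False then show ?thesis using cc_sub[OF aX', of 0 i] that a0 by simp
    qed
    moreover have "cc (Suc k0) (a i) v" using cc_sub[OF aX', of i L] that aL' by simp
    ultimately show ?thesis unfolding ceq_def by blast
  qed
  have ceqb: "ceq (Suc k0) v (b i)" if "i < L" for i
  proof -
    have biX: "b i \<in> X" using bX that by simp
    have "cc (Suc k0) v (b i)"
    proof (cases "i = 0")
      case True then show ?thesis using vb0 by simp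
    next
      case False
      then have "cc (Suc k0) (b 0) (b i)" using cc_sub[OF bX', of 0 i] that by simp
      then show ?thesis using cc_trans[OF vX bX[of 0] biX vb0] by simp
    qed
    moreover have "cc (Suc k0) (b i) v"
    proof -
      have "cc (Suc k0) (b i) (b L)" using cc_sub[OF bX', of i L] that by simp
      moreover have "v \<in> cs (Suc k0) (b L)" using csym[OF vX bL'] .
      ultimately show ?thesis using cc_cell2[OF bX[of L]] by simp
    qed
    ultimately show ?thesis unfolding ceq_def by blast
  qed
  obtain x0 where x0: "x0 \<in> chain_recurrent_set f X" "AR k0 v x0" "\<And>k. k \<ge> k0 \<Longrightarrow> AR k x0 x0"
    using good_component[OF vX vv] by blast
  have x0X: "x0 \<in> X" using x0(1) CR_cc by blast
  define C where "C = {y. chain_equiv f X x0 y}"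
  have CC: "C \<in> chain_components f X" unfolding C_def chain_components_def using x0(1) by blast
  have CX: "C \<subseteq> X" unfolding C_def using CE_X by blast
  have shC: "shadowing f C"
    unfolding shadowing_def
  proof (intro allI impI)
    fix \<epsilon> :: real assume e: "\<epsilon> > 0"
    obtain k1 where k1: "inverse (real (Suc k1)) < \<epsilon>" using reals_Archimedean[OF e] by blast
    define k where "k = max k0 k1"
    have kk0: "k \<ge> k0" unfolding k_def by simp
    have kle: "inverse (real (Suc k)) < \<epsilon>"
    proof -
      have "real (Suc k1) \<le> real (Suc k)" unfolding k_def by simp
      then have "inverse (real (Suc k)) \<le> inverse (real (Suc k1))" by (rule le_imp_inverse_le) simp
      then show ?thesis using k1 by linarith
    qed
    obtain \<eta> where eta: "\<eta> > 0" "\<forall>x\<in>X. \<forall>y\<in>X. dist x y < \<eta> \<longrightarrow> y \<in> cs (Suc k) x" using leb by blast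
    show "\<exists>\<delta>>0. \<forall>xs. (\<forall>i. xs i \<in> C) \<and> (\<forall>i. dist (f (xs i)) (xs (Suc i)) \<le> \<delta>) \<longrightarrow> (\<exists>x\<in>C. \<forall>i. dist ((f ^^ i) x) (xs i) \<le> \<epsilon>)"
    proof (intro exI[of _ "\<eta>/2"] conjI allI impI)
      show "\<eta>/2 > 0" using eta by simp
      fix xs assume xs: "(\<forall>i. xs i \<in> C) \<and> (\<forall>i. dist (f (xs i)) (xs (Suc i)) \<le> \<eta>/2)"
      have xsX: "xs i \<in> X" for i using xs CX by blast
      have "path (Suc k) xs"
        unfolding path_def
      proof (intro conjI allI)
        fix i
        show "xs i \<in> X" by (rule xsX)
        have "dist (f (xs i)) (xs (Suc i)) \<le> \<eta>/2" using xs by blast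
        then have "dist (xs (Suc i)) (f (xs i)) < \<eta>" using eta(1) by (simp add: dist_commute)
        then show "f (xs i) \<in> cs (Suc k) (xs (Suc i))" using eta(2) xsX fX by blast
      qed
      moreover have "ceq (Suc k) x0 (xs i)" for i using xs CE_iff unfolding C_def by blast
      ultimately have "Apath (Suc k) x0 xs" unfolding Apath_def by blast
      then obtain y where y: "chain_equiv f X x0 y" "realizes k y xs" using x0(3)[OF kk0] unfolding AR_def by blast
      have "dist ((f ^^ i) y) (xs i) \<le> \<epsilon>" for i
      proof -
        have "(f ^^ i) y \<in> cs k (xs i)" using y(2) unfolding realizes_def by blast
        then have "dist (xs i) ((f ^^ i) y) < inverse (real (Suc k))" using mesh[OF xsX] by blast
        then show ?thesis using kle by (simp add: dist_commute)
      qed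
      moreover have "y \<in> C" unfolding C_def using y(1) by simp
      ultimately show "\<exists>x\<in>C. \<forall>i. dist ((f ^^ i) x) (xs i) \<le> \<epsilon>" by blast
    qed
  qed
  obtain i0 where i0: "i0 < L" "cs k0 (a i0) \<noteq> cs k0 (b i0)" using dif by blast
  obtain \<eta>0 where eta0: "\<eta>0 > 0" "\<forall>x\<in>X. \<forall>y\<in>X. dist x y < \<eta>0 \<longrightarrow> y \<in> cs k0 x" using leb by blast
  define \<gamma> where "\<gamma> = \<eta>0 / 2"
  have gam: "\<gamma> > 0" "\<gamma> < \<eta>0" using eta0(1) unfolding \<gamma>_def by auto
  define zs where "zs s n = (if s (n div L) then a (n mod L) else b (n mod L))" for s :: "nat \<Rightarrow> bool" and n
  have zs_path: "Apath (Suc k0) v (zs s)" for s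
  proof -
    have zX: "zs s n \<in> X" for n unfolding zs_def using aX bX L0 by simp
    have "f (zs s n) \<in> cs (Suc k0) (zs s (Suc n))" for n
    proof (cases "Suc (n mod L) < L")
      case True
      have md: "Suc n mod L = Suc (n mod L)" "Suc n div L = n div L"
        using True by (simp_all add: mod_Suc div_Suc)
      show ?thesis unfolding zs_def md using ap bp True by simp
    next
      case False
      then have nl: "Suc (n mod L) = L" using L0 by (metis Suc_lessI mod_less_divisor)
      then have md: "Suc n mod L = 0" by (simp add: mod_Suc)
      have fa: "f (a (n mod L)) \<in> cs (Suc k0) v" using ap[of "n mod L"] nl aL' L0 by simp
      have fb: "f (b (n mod L)) \<in> cs (Suc k0) v"
      proof -
        have "f (b (n mod L)) \<in> cs (Suc k0) (b L)" using bp[of "n mod L"] nl L0 by simp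
        then show ?thesis using ceqc[OF vX bL'] by simp
      qed
      have "cs (Suc k0) (zs s (Suc n)) = cs (Suc k0) v"
      proof -
        have "zs s (Suc n) = a 0 \<or> zs s (Suc n) = b 0" unfolding zs_def md by simp
        moreover have "cs (Suc k0) (b 0) = cs (Suc k0) v" using ceqc[OF vX b0'] .
        ultimately show ?thesis using a0 by metis
      qed
      moreover have "f (zs s n) \<in> cs (Suc k0) v" using fa fb unfolding zs_def by simp
      ultimately show ?thesis by simp
    qed
    moreover have "ceq (Suc k0) v (zs s n)" for n unfolding zs_def using ceqa ceqb L0 by simp
    ultimately show ?thesis unfolding Apath_def path_def using zX by blast
  qed
  define Y where "Y s = (SOME y. chain_equiv f X x0 y \<and> realizes k0 y (zs s))" for s
  have Y: "chain_equiv f X x0 (Y s) \<and> realizes k0 (Y s) (zs s)" for s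
  proof -
    have "\<exists>y. chain_equiv f X x0 y \<and> realizes k0 y (zs s)" using x0(2) zs_path unfolding AR_def by blast
    then show ?thesis unfolding Y_def by (rule someI_ex)
  qed
  define sw where "sw w l = (l < length w \<and> w ! l)" for w :: "bool list" and l
  define EN where "EN N = (\<lambda>w. Y (sw w)) ` {w. set w \<subseteq> UNIV \<and> length w = N}" for N
  have sep: "dist ((f ^^ (l * L + i0)) (Y (sw w))) ((f ^^ (l * L + i0)) (Y (sw w'))) > \<gamma>"
    if w: "length w = N" "length w' = N" "l < N" "w ! l \<noteq> w' ! l" for w w' N l
  proof (rule ccontr)
    assume "\<not> ?thesis"
    then have d: "dist ((f ^^ (l * L + i0)) (Y (sw w))) ((f ^^ (l * L + i0)) (Y (sw w'))) < \<eta>0" using gam by simp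
    define t where "t = l * L + i0"
    have td: "t div L = l" "t mod L = i0" unfolding t_def using i0(1) by auto
    have YX: "Y s \<in> X" for s using Y CE_X by blast
    have c1: "(f ^^ t) (Y (sw w)) \<in> cs k0 (zs (sw w) t)" using Y unfolding realizes_def by blast
    have c2: "(f ^^ t) (Y (sw w')) \<in> cs k0 (zs (sw w') t)" using Y unfolding realizes_def by blast
    have "(f ^^ t) (Y (sw w')) \<in> cs k0 ((f ^^ t) (Y (sw w)))" using eta0(2) d fnX YX unfolding t_def by blast
    then have eqc: "cs k0 ((f ^^ t) (Y (sw w'))) = cs k0 ((f ^^ t) (Y (sw w)))" using ceqc fnX YX by blast
    have zX: "zs s t \<in> X" for s unfolding zs_def using aX bX L0 by simp
    have e1: "cs k0 ((f ^^ t) (Y (sw w))) = cs k0 (zs (sw w) t)" using ceqc[OF zX c1] .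
    have e2: "cs k0 ((f ^^ t) (Y (sw w'))) = cs k0 (zs (sw w') t)" using ceqc[OF zX c2] .
    have "cs k0 (zs (sw w) t) = cs k0 (zs (sw w') t)" using e1 e2 eqc by simp
    moreover have "{zs (sw w) t, zs (sw w') t} = {a i0, b i0}"
      unfolding zs_def td sw_def using w by auto
    ultimately have "cs k0 (a i0) = cs k0 (b i0)" by (auto simp: doubleton_eq_iff)
    then show False using i0(2) by simp
  qed
  have EN_card: "card (EN N) = 2 ^ N" for N
  proof -
    have "inj_on (\<lambda>w. Y (sw w)) {w. set w \<subseteq> UNIV \<and> length w = N}"
    proof
      fix w w' assume ww: "w \<in> {w. set w \<subseteq> UNIV \<and> length w = N}" "w' \<in> {w. set w \<subseteq> UNIV \<and> length w = N}" "Y (sw w) = Y (sw w')"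
      show "w = w'"
      proof (rule ccontr)
        assume "w \<noteq> w'"
        moreover have "length w = N" "length w' = N" using ww by auto
        ultimately obtain l where "l < N" "w ! l \<noteq> w' ! l" using list_diff_idx by blast
        then show False using sep[of w N w' l] ww gam by simp
      qed
    qed
    then have "card (EN N) = card {w. set w \<subseteq> (UNIV :: bool set) \<and> length w = N}" unfolding EN_def by (rule card_image)
    also have "\<dots> = 2 ^ N" using card_lists_length_eq[of "UNIV :: bool set" N] by simp
    finally show ?thesis .
  qed
  have EN_sep: "separated_set f C n \<gamma> (EN N)" if "N * L \<le> n" for N n
    unfolding separated_set_def
  proof (intro conjI ballI impI)
    show "EN N \<subseteq> C" unfolding EN_def C_def using Y by blast
    fix x y assume xy: "x \<in> EN N" "y \<in> EN N" "x \<noteq> y"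
    obtain w w' where w: "length w = N" "length w' = N" "x = Y (sw w)" "y = Y (sw w')" using xy unfolding EN_def by blast
    then have "w \<noteq> w'" using xy(3) by blast
    then obtain l where l: "l < N" "w ! l \<noteq> w' ! l" using w list_diff_idx by blast
    have "l * L + i0 < n"
    proof -
      have "l * L + i0 < Suc l * L" using i0(1) by simp
      also have "\<dots> \<le> N * L" using l(1) by (intro mult_le_mono1) simp
      finally show ?thesis using that by simp
    qed
    then show "\<exists>i<n. dist ((f ^^ i) x) ((f ^^ i) y) > \<gamma>" using sep[OF w(1,2) l] w(3,4) by blast
  qed
  have finEN: "finite (EN N)" for N unfolding EN_def using finite_lists_length_eq[of "UNIV :: bool set" N] by simp
  obtain k' where k': "\<forall>K n E. K \<subseteq> X \<longrightarrow> finite E \<longrightarrow> separated_set f K n \<gamma> E \<longrightarrow> real (card E) \<le> real (card (cs k' ` X) ^ n)"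
    using sep_card_bound[OF gam(1)] by blast
  have msge: "real (2 ^ (n div L)) \<le> max_sep f C n \<gamma>" for n
  proof -
    have "(n div L) * L \<le> n" by simp
    then have "separated_set f C n \<gamma> (EN (n div L))" by (rule EN_sep)
    moreover have "\<And>E. finite E \<Longrightarrow> separated_set f C n \<gamma> E \<Longrightarrow> real (card E) \<le> real (card (cs k' ` X) ^ n)"
      using k' CX by blast
    ultimately show ?thesis using max_sep_ge[of f C n \<gamma> _ "EN (n div L)"] finEN EN_card by metis
  qed
  define c where "c = ln 2 / (2 * real L)"
  have cpos: "c > 0" unfolding c_def using L0 by simp
  have ev: "eventually (\<lambda>n. ereal c \<le> ereal (ln (max_sep f C n \<gamma>) / real n)) sequentially"
  proof (rule eventually_sequentiallyI[of L])
    fix n assume n: "L \<le> n"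
    define N where "N = n div L"
    have "L div L \<le> n div L" by (rule div_le_mono[OF n])
    then have N1: "N \<ge> 1" unfolding N_def using L0 by simp
    have nN: "real n \<le> 2 * real N * real L"
    proof -
      have "n = N * L + n mod L" unfolding N_def by simp
      moreover have "n mod L < L" using L0 by simp
      ultimately have a: "n < N * L + L" by linarith
      have "1 * L \<le> N * L" using N1 by (rule mult_le_mono1)
      then have "N * L + L \<le> 2 * N * L" by simp
      then have "n \<le> 2 * N * L" using a by linarith
      then have "real n \<le> real (2 * N * L)" by (simp only: of_nat_le_iff)
      then show ?thesis by simp
    qed
    have npos: "real n > 0" using n L0 by simp
    have m2: "(2::real) ^ N \<le> max_sep f C n \<gamma>" using msge[of n] unfolding N_def by simp
    have p2: "(0::real) < 2 ^ N" by simp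
    have mpos: "0 < max_sep f C n \<gamma>" using p2 m2 by linarith
    have "ln (2 ^ N) \<le> ln (max_sep f C n \<gamma>)" using ln_le_cancel_iff[OF p2 mpos] m2 by simp
    then have A: "real N * ln 2 \<le> ln (max_sep f C n \<gamma>)" by (simp add: ln_realpow)
    have "c * real n \<le> real N * ln 2"
    proof -
      have "c * real n \<le> c * (2 * real N * real L)" using nN cpos by (simp add: mult_left_mono)
      also have "\<dots> = real N * ln 2" unfolding c_def using L0 by (simp add: field_simps)
      finally show ?thesis .
    qed
    then have "c * real n \<le> ln (max_sep f C n \<gamma>)" using A by simp
    then have "c \<le> ln (max_sep f C n \<gamma>) / real n" using npos by (simp add: field_simps)
    then show "ereal c \<le> ereal (ln (max_sep f C n \<gamma>) / real n)" by simp
  qed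
  have "ereal c \<le> limsup (\<lambda>n. ereal (ln (max_sep f C n \<gamma>) / real n))"
    by (rule le_Limsup[OF trivial_limit_sequentially ev])
  also have "\<dots> \<le> htop f C" unfolding htop_def using gam(1) by (intro SUP_upper) simp
  finally have "htop f C > 0" using cpos by (metis ereal_less(2) less_le_trans)
  then show ?thesis using CC shC by blast
qed

end

lemma fnX_gen: "f ` X \<subseteq> X \<Longrightarrow> x \<in> X \<Longrightarrow> (f ^^ n) x \<in> X"
  by (induction n) auto

lemma next_level:
  fixes f :: "'a::metric_space \<Rightarrow> 'a"
  assumes cpt: "compact X" and fX: "f ` X \<subseteq> X" and sh: "shadowing f X" and zd: "zero_dimensional X"
    and c: "ispart X c" and e: "e > 0"
  shows "\<exists>c'. ispart X c' \<and> (\<forall>x\<in>X. c' x \<subseteq> c x) \<and> (\<forall>x\<in>X. \<forall>y\<in>c' x. dist x y < e) \<and>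
    (\<forall>z. (\<forall>i. z i \<in> X) \<and> (\<forall>i. f (z i) \<in> c' (z (Suc i))) \<longrightarrow> (\<exists>y\<in>X. \<forall>i. (f ^^ i) y \<in> c (z i)))"
proof -
  obtain \<eta> where eta: "\<eta> > 0" "\<forall>x\<in>X. \<forall>y\<in>X. dist x y < \<eta> \<longrightarrow> y \<in> c x" using ispart_leb[OF c cpt] by blast
  obtain \<delta> where d: "\<delta> > 0" "\<forall>xs. (\<forall>i. xs i \<in> X) \<and> (\<forall>i. dist (f (xs i)) (xs (Suc i)) \<le> \<delta>) \<longrightarrow> (\<exists>x\<in>X. \<forall>i. dist ((f ^^ i) x) (xs i) \<le> \<eta>/2)"
  proof -
    have "\<eta>/2 > 0" using eta(1) by simp
    from sh[unfolded shadowing_def, rule_format, OF this] show ?thesis using that by blast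
  qed
  obtain q where q: "ispart X q" "\<forall>x\<in>X. \<forall>y\<in>q x. dist x y < min \<delta> e"
    using part_exists[OF cpt zd, of "min \<delta> e"] d(1) e by auto
  define c' where "c' x = c x \<inter> q x" for x
  have "ispart X c'" unfolding c'_def by (rule ispart_meet[OF c q(1)])
  moreover have "\<forall>x\<in>X. c' x \<subseteq> c x" unfolding c'_def by blast
  moreover have "\<forall>x\<in>X. \<forall>y\<in>c' x. dist x y < e" unfolding c'_def using q(2) by fastforce
  moreover have "\<exists>y\<in>X. \<forall>i. (f ^^ i) y \<in> c (z i)" if z: "\<forall>i. z i \<in> X" "\<forall>i. f (z i) \<in> c' (z (Suc i))" for z
  proof -
    have "dist (f (z i)) (z (Suc i)) \<le> \<delta>" for i
    proof -
      have "f (z i) \<in> q (z (Suc i))" using z(2) unfolding c'_def by blast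
      then have "dist (z (Suc i)) (f (z i)) < min \<delta> e" using q(2) z(1) by blast
      then show ?thesis by (simp add: dist_commute)
    qed
    then obtain x where x: "x \<in> X" "\<forall>i. dist ((f ^^ i) x) (z i) \<le> \<eta>/2" using d(2) z(1) by blast
    have "(f ^^ i) x \<in> c (z i)" for i
    proof -
      have "dist ((f ^^ i) x) (z i) \<le> \<eta>/2" using x(2) by blast
      then have "dist (z i) ((f ^^ i) x) < \<eta>" using eta(1) by (simp add: dist_commute)
      then show ?thesis using eta(2) z(1) fnX_gen[OF fX x(1)] by blast
    qed
    then show ?thesis using x(1) by blast
  qed
  ultimately show ?thesis by blast
qed

lemma levels_exist:
  fixes f :: "'a::metric_space \<Rightarrow> 'a"
  assumes cpt: "compact X" and cont: "continuous_on X f" and fX: "f ` X \<subseteq> X" and sh: "shadowing f X" and zd: "zero_dimensional X"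
  shows "\<exists>cs. lev f X cs"
proof -
  define NLP where "NLP j c c' \<longleftrightarrow> ispart X c' \<and> (\<forall>x\<in>X. c' x \<subseteq> c x) \<and> (\<forall>x\<in>X. \<forall>y\<in>c' x. dist x y < inverse (real (Suc (Suc j)))) \<and>
    (\<forall>z. (\<forall>i. z i \<in> X) \<and> (\<forall>i. f (z i) \<in> c' (z (Suc i))) \<longrightarrow> (\<exists>y\<in>X. \<forall>i. (f ^^ i) y \<in> c (z i)))" for j c c'
  obtain c0 where c0: "ispart X c0" "\<forall>x\<in>X. \<forall>y\<in>c0 x. dist x y < 1" using part_exists[OF cpt zd, of 1] by auto
  define cs where "cs = rec_nat c0 (\<lambda>j c. SOME c'. NLP j c c')"
  have cs0: "cs 0 = c0" unfolding cs_def by simp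
  have csS: "cs (Suc j) = (SOME c'. NLP j (cs j) c')" for j unfolding cs_def by simp
  have inv: "ispart X (cs j) \<and> NLP j (cs j) (cs (Suc j))" for j
  proof (induction j)
    case 0
    have "\<exists>c'. NLP 0 c0 c'" unfolding NLP_def by (rule next_level[OF cpt fX sh zd c0(1)]) simp
    then have "NLP 0 c0 (SOME c'. NLP 0 c0 c')" by (rule someI_ex)
    then show ?case using c0 cs0 csS[of 0] by simp
  next
    case (Suc j)
    then have p: "ispart X (cs (Suc j))" unfolding NLP_def by blast
    have "\<exists>c'. NLP (Suc j) (cs (Suc j)) c'" unfolding NLP_def by (rule next_level[OF cpt fX sh zd p]) simp
    then have "NLP (Suc j) (cs (Suc j)) (SOME c'. NLP (Suc j) (cs (Suc j)) c')" by (rule someI_ex)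
    then show ?case using p csS[of "Suc j"] by simp
  qed
  have "lev f X cs"
  proof
    show "compact X" by (rule cpt)
    show "continuous_on X f" by (rule cont)
    show "f ` X \<subseteq> X" by (rule fX)
    show "ispart X (cs j)" for j using inv by blast
    show "cs (Suc j) x \<subseteq> cs j x" if "x \<in> X" for j x using inv[of j] that unfolding NLP_def by blast
    show "dist x y < inverse (real (Suc j))" if "x \<in> X" "y \<in> cs j x" for j x y
    proof (cases j)
      case 0 then show ?thesis using c0(2) that cs0 by simp
    next
      case (Suc j')
      then show ?thesis using inv[of j'] that unfolding NLP_def by blast
    qed
    show "\<exists>y\<in>X. \<forall>i. (f ^^ i) y \<in> cs j (z i)" if "\<And>i. z i \<in> X" "\<And>i. f (z i) \<in> cs (Suc j) (z (Suc i))" for j z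
      using inv[of j] that unfolding NLP_def by blast
  qed
  then show ?thesis by blast
qed

theorem lemma4p1:
  fixes f :: "'a::metric_space \<Rightarrow> 'a" and X :: "'a set"
  assumes "compact X"
    and "continuous_on X f"
    and "f ` X \<subseteq> X"
    and "shadowing f X"
    and "zero_dimensional X"
    and "htop f X > 0"
  shows "\<exists>C \<in> chain_components f X. shadowing f C \<and> htop f C > 0"
proof -
  obtain cs where "lev f X cs" using levels_exist[OF assms(1-5)] by blast
  then interpret lev f X cs .
  obtain k0 a b L where "HS k0 a b L" using horseshoe_exists[OF assms(6)] by blast
  then show ?thesis by (rule final_component)
qed

end
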